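(* Let $s>0$. There exist $\delta=\delta(s)>0$ and $C=C(s)$ such that for all $M\ge1$, $T>0$ and $\omega,\tilde\omega\in C([0,T];\ell^2_s(\mathbb Z))$, $$\|\mathcal N_0[\omega]\|_{C_T\ell^2_s}\le CM^{-\delta}\|\omega\|_{C_T\ell^2_s}^3,\qquad \|\mathcal N_0[\omega]-\mathcal N_0[\tilde\omega]\|_{C_T\ell^2_s}\le CM^{-\delta}\big(\|\omega\|_{C_T\ell^2_s}^2+\|\tilde\omega\|_{C_T\ell^2_s}^2\big)\|\omega-\tilde\omega\|_{C_T\ell^2_s}.$$
   Context: $\langle n\rangle=(1+n^2)^{1/2}$, $\|\omega\|_{\ell^2_s}=\|\langle\cdot\rangle^s\omega\|_{\ell^2}$, $C_T\ell^2_s:=C([0,T];\ell^2_s(\mathbb Z))$ with sup-in-time norm, $\omega^*(n):=\overline{\omega(-n)}$. Notation $n_{ij\ldots}=n_i+n_j+\cdots$, $\hat n:=n-i\mathbf 1_{\{n=0\}}$; for $n=n_{123}$: $m_1:=2i\frac{nn_{23}}{\hat n_1\hat n_2}\mathbf 1_{\{n>0\}}\mathbf 1_{\{n_{23}<0\}}\mathbf 1_{\{n_3\ne0\}}$, $\tilde m_1:=m_1\mathbf 1_{\{n_{12}n_{13}\ne0\}}$, $\Phi:=n|n|-n_1|n_1|-n_2|n_2|-n_3|n_3|$. For $M>0$, $t\in[0,T]$: $$\mathcal N_0[\omega](t,n):=-i\sum_{n=n_{123},\ |\Phi|> M}\frac{e^{it\Phi}\tilde m_1(n,n_1,n_2,n_3)}{\Phi}\,\omega(t,n_1)\omega(t,n_2)\omega^*(t,n_3)\quad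 (n>0),$$ and $\mathcal N_0[\omega](t,n):=0$ for $n\le0$. *)

theory Defs
  imports "HOL-Analysis.Analysis"
begin

definition jbr :: "int \<Rightarrow> real" where
  "jbr n = (1 + (real_of_int n)\<^sup>2) powr (1/2)"

definition in_l2s :: "real \<Rightarrow> (int \<Rightarrow> complex) \<Rightarrow> bool" where
  "in_l2s s f \<longleftrightarrow> (\<lambda>n. (jbr n powr s * cmod (f n))\<^sup>2) summable_on UNIV"

definition l2s_norm :: "real \<Rightarrow> (int \<Rightarrow> complex) \<Rightarrow> real" where
  "l2s_norm s f = sqrt (\<Sum>\<^sub>\<infinity>n. (jbr n powr s * cmod (f n))\<^sup>2)"

definition CT_l2s :: "real \<Rightarrow> real \<Rightarrow> (real \<Rightarrow> int \<Rightarrow> complex) set" where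
  "CT_l2s T s = {w. (\<forall>t\<in>{0..T}. in_l2s s (w t)) \<and>
     (\<forall>t\<in>{0..T}. ((\<lambda>t'. l2s_norm s (\<lambda>n. w t' n - w t n)) \<longlongrightarrow> 0) (at t within {0..T}))}"

definition CT_norm :: "real \<Rightarrow> real \<Rightarrow> (real \<Rightarrow> int \<Rightarrow> complex) \<Rightarrow> real" where
  "CT_norm T s w = (SUP t\<in>{0..T}. l2s_norm s (w t))"

definition hatn :: "int \<Rightarrow> complex" where
  "hatn n = of_int n - (if n = 0 then \<i> else 0)"

text \<open>m_1(n,n1,n2,n3) with n = n1+n2+n3\<close>
definition m1 :: "int \<Rightarrow> int \<Rightarrow> int \<Rightarrow> int \<Rightarrow> complex" where
  "m1 n n1 n2 n3 =
     (if n > 0 \<and> n2 + n3 < 0 \<and> n3 \<noteq> 0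
      then 2 * \<i> * of_int (n * (n2 + n3)) / (hatn n1 * hatn n2) else 0)"

definition m1t :: "int \<Rightarrow> int \<Rightarrow> int \<Rightarrow> int \<Rightarrow> complex" where
  "m1t n n1 n2 n3 = (if (n1 + n2) * (n1 + n3) \<noteq> 0 then m1 n n1 n2 n3 else 0)"

definition Phi :: "int \<Rightarrow> int \<Rightarrow> int \<Rightarrow> int \<Rightarrow> int" where
  "Phi n n1 n2 n3 = n * \<bar>n\<bar> - n1 * \<bar>n1\<bar> - n2 * \<bar>n2\<bar> - n3 * \<bar>n3\<bar>"

definition star :: "(int \<Rightarrow> complex) \<Rightarrow> int \<Rightarrow> complex" where
  "star f n = cnj (f (- n))"

definition N0 :: "real \<Rightarrow> (real \<Rightarrow> int \<Rightarrow> complex) \<Rightarrow> real \<Rightarrow> int \<Rightarrow> complex" where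
  "N0 M w t n =
     (if n > 0 then
        - \<i> * (\<Sum>\<^sub>\<infinity>(n1, n2, n3) \<in> {(n1, n2, n3). n1 + n2 + n3 = n \<and>
                      real_of_int \<bar>Phi n n1 n2 n3\<bar> > M}.
            exp (\<i> * of_real t * of_int (Phi n n1 n2 n3)) * m1t n n1 n2 n3
              / of_int (Phi n n1 n2 n3)
              * w t n1 * w t n2 * star (w t) n3)
      else 0)"

end

theory Submission
  imports Defs
begin

lemma jbr_sqrt: "jbr n = sqrt (1 + (real_of_int n)\<^sup>2)"
  unfolding jbr_def by (simp add: powr_half_sqrt add_pos_nonneg)

lemma jbr_ge1: "jbr n \<ge> 1"
  unfolding jbr_sqrt by simp

lemma jbr_pos: "jbr n > 0"
  using jbr_ge1[of n] by linarith

lemma jbr_ge_abs: "\<bar>real_of_int n\<bar> \<le> jbr n"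
  unfolding jbr_sqrt by (rule real_le_rsqrt) simp

lemma jbr_minus: "jbr (- n) = jbr n"
  unfolding jbr_sqrt by simp

lemma jbr_le_1abs: "jbr n \<le> 1 + \<bar>real_of_int n\<bar>"
  unfolding jbr_sqrt
  by (rule real_sqrt_le_iff[THEN iffD2, of _ "(1 + \<bar>real_of_int n\<bar>)^2", simplified])
     (simp add: power2_eq_square algebra_simps)

lemma jbr_mono: "\<bar>a\<bar> \<le> \<bar>b\<bar> \<Longrightarrow> jbr a \<le> jbr b"
  unfolding jbr_sqrt
proof -
  assume "\<bar>a\<bar> \<le> \<bar>b\<bar>"
  then have "(real_of_int a)\<^sup>2 \<le> (real_of_int b)\<^sup>2"
    by (metis abs_le_square_iff of_int_abs of_int_le_iff)
  then show "sqrt (1 + (real_of_int a)\<^sup>2) \<le> sqrt (1 + (real_of_int b)\<^sup>2)" by simp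
qed

lemma jbr_powr_mono: "\<bar>a\<bar> \<le> \<bar>b\<bar> \<Longrightarrow> s \<ge> 0 \<Longrightarrow> jbr a powr s \<le> jbr b powr s"
  by (simp add: jbr_mono jbr_pos powr_mono2 less_imp_le)

lemma sq_expand: "r > 0 \<Longrightarrow> (r * u - v / r)\<^sup>2 = (r * r) * u\<^sup>2 - 2 * u * v + v\<^sup>2 / (r * r)"
  for r u v :: real
  by (simp add: power2_eq_square field_simps)

lemma cs_infsum:
  fixes x y :: "'a \<Rightarrow> real"
  assumes x0: "\<And>a. a \<in> A \<Longrightarrow> x a \<ge> 0" and y0: "\<And>a. a \<in> A \<Longrightarrow> y a \<ge> 0"
    and xs: "(\<lambda>a. (x a)\<^sup>2) summable_on A" and ys: "(\<lambda>a. (y a)\<^sup>2) summable_on A"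
  shows "(\<lambda>a. x a * y a) summable_on A"
    and "(\<Sum>\<^sub>\<infinity>a\<in>A. x a * y a) \<le> sqrt (\<Sum>\<^sub>\<infinity>a\<in>A. (x a)\<^sup>2) * sqrt (\<Sum>\<^sub>\<infinity>a\<in>A. (y a)\<^sup>2)"
proof -
  have sxy: "(\<lambda>a. ((x a)\<^sup>2 + (y a)\<^sup>2)/2) summable_on A"
    using summable_on_cmult_left[OF summable_on_add[OF xs ys], of "1/2"] by simp
  have le: "x a * y a \<le> ((x a)\<^sup>2 + (y a)\<^sup>2)/2" for a
    using sum_squares_ge_zero[of "x a - y a" 0] by (simp add: power2_eq_square algebra_simps)
  show sm: "(\<lambda>a. x a * y a) summable_on A"
    by (rule summable_on_comparison_test[OF sxy]) (use le x0 y0 in auto)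
  define X where "X = (\<Sum>\<^sub>\<infinity>a\<in>A. (x a)\<^sup>2)"
  define Y where "Y = (\<Sum>\<^sub>\<infinity>a\<in>A. (y a)\<^sup>2)"
  have X0: "X \<ge> 0" unfolding X_def by (rule infsum_nonneg) simp
  have Y0: "Y \<ge> 0" unfolding Y_def by (rule infsum_nonneg) simp
  have P0: "(\<Sum>\<^sub>\<infinity>a\<in>A. x a * y a) \<ge> 0" by (rule infsum_nonneg) (simp add: x0 y0)
  have "(\<Sum>\<^sub>\<infinity>a\<in>A. x a * y a) \<le> sqrt X * sqrt Y"
  proof (cases "X = 0 \<or> Y = 0")
    case True
    then show ?thesis
    proof
      assume "X = 0"
      then have "\<forall>a\<in>A. (x a)\<^sup>2 = 0"
        using nonneg_infsum_le_0D[of "\<lambda>a. (x a)\<^sup>2", OF _ xs] X_def by force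
      then have "(\<Sum>\<^sub>\<infinity>a\<in>A. x a * y a) = 0"
        by (intro infsum_0) simp
      then show ?thesis using X0 Y0 by simp
    next
      assume "Y = 0"
      then have "\<forall>a\<in>A. (y a)\<^sup>2 = 0"
        using nonneg_infsum_le_0D[of "\<lambda>a. (y a)\<^sup>2", OF _ ys] Y_def by force
      then have "(\<Sum>\<^sub>\<infinity>a\<in>A. x a * y a) = 0"
        by (intro infsum_0) simp
      then show ?thesis using X0 Y0 by simp
    qed
  next
    case False
    then have Xp: "X > 0" and Yp: "Y > 0" using X0 Y0 by auto
    define l where "l = sqrt Y / sqrt X"
    have lp: "l > 0" unfolding l_def using Xp Yp by simp
    have le2: "x a * y a \<le> (l * (x a)\<^sup>2 + (y a)\<^sup>2 / l)/2" for a
    proof -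
      have "0 \<le> (sqrt l * x a - y a / sqrt l)\<^sup>2" by simp
      also have "\<dots> = (sqrt l * sqrt l) * (x a)\<^sup>2 - 2 * x a * y a + (y a)\<^sup>2 / (sqrt l * sqrt l)"
        using sq_expand[of "sqrt l" "x a" "y a"] lp by simp
      also have "\<dots> = l * (x a)\<^sup>2 - 2 * x a * y a + (y a)\<^sup>2 / l"
        using lp by simp
      finally show ?thesis by simp
    qed
    have s1: "(\<lambda>a. l * (x a)\<^sup>2) summable_on A" using xs by (rule summable_on_cmult_right)
    have s2: "(\<lambda>a. (y a)\<^sup>2 / l) summable_on A" using ys by (rule summable_on_cmult_left[where c="1/l", simplified])
    have "(\<Sum>\<^sub>\<infinity>a\<in>A. x a * y a) \<le> (\<Sum>\<^sub>\<infinity>a\<in>A. (l * (x a)\<^sup>2 + (y a)\<^sup>2 / l)/2)"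
      by (rule infsum_mono[OF sm]) (use summable_on_cmult_left[OF summable_on_add[OF s1 s2], of "1/2"] le2 in \<open>auto\<close>)
    also have "\<dots> = (\<Sum>\<^sub>\<infinity>a\<in>A. (l * (x a)\<^sup>2 + (y a)\<^sup>2 / l)) * (1/2)"
      using infsum_cmult_left'[of "\<lambda>a. l * (x a)\<^sup>2 + (y a)\<^sup>2 / l" "1/2" A] by simp
    also have "\<dots> = ((\<Sum>\<^sub>\<infinity>a\<in>A. l * (x a)\<^sup>2) + (\<Sum>\<^sub>\<infinity>a\<in>A. (y a)\<^sup>2 * (1/l))) * (1/2)"
      using infsum_add[OF s1 s2] by simp
    also have "\<dots> = (l * X + Y / l)/2"
      unfolding X_def Y_def
      using infsum_cmult_right'[of l "\<lambda>a. (x a)\<^sup>2" A] infsum_cmult_left'[of "\<lambda>a. (y a)\<^sup>2" "1/l" A]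
      by simp
    also have "\<dots> = sqrt X * sqrt Y"
      using Xp Yp unfolding l_def
      by (simp add: field_simps real_sqrt_mult[symmetric])
    finally show ?thesis .
  qed
  then show "(\<Sum>\<^sub>\<infinity>a\<in>A. x a * y a) \<le> sqrt (\<Sum>\<^sub>\<infinity>a\<in>A. (x a)\<^sup>2) * sqrt (\<Sum>\<^sub>\<infinity>a\<in>A. (y a)\<^sup>2)"
    by (simp add: X_def Y_def)
qed

definition wv :: "real \<Rightarrow> (int \<Rightarrow> complex) \<Rightarrow> int \<Rightarrow> real" where
  "wv s f k = jbr k powr s * cmod (f k)"

lemma wv_nonneg: "wv s f k \<ge> 0"
  unfolding wv_def by (simp add: jbr_pos less_imp_le)

lemma in_l2s_wv: "in_l2s s f \<longleftrightarrow> (\<lambda>k. (wv s f k)\<^sup>2) summable_on UNIV"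
  unfolding in_l2s_def wv_def by simp

lemma l2s_norm_wv: "l2s_norm s f = sqrt (\<Sum>\<^sub>\<infinity>k. (wv s f k)\<^sup>2)"
  unfolding l2s_norm_def wv_def by simp

lemma l2s_norm_nonneg: "l2s_norm s f \<ge> 0"
  unfolding l2s_norm_wv by (simp add: infsum_nonneg)

lemma l2s_norm_sq: "(l2s_norm s f)\<^sup>2 = (\<Sum>\<^sub>\<infinity>k. (wv s f k)\<^sup>2)"
  unfolding l2s_norm_wv by (simp add: infsum_nonneg)

lemma wv_le_norm:
  assumes "in_l2s s f" shows "wv s f k \<le> l2s_norm s f"
proof -
  have "sum (\<lambda>k. (wv s f k)\<^sup>2) {k} \<le> (\<Sum>\<^sub>\<infinity>k. (wv s f k)\<^sup>2)"
    by (rule finite_sum_le_infsum) (use assms in \<open>auto simp: in_l2s_wv\<close>)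
  then have "(wv s f k)\<^sup>2 \<le> (l2s_norm s f)\<^sup>2" by (simp add: l2s_norm_sq)
  then show ?thesis using l2s_norm_nonneg[of s f] wv_nonneg[of s f k]
    using power2_le_imp_le by blast
qed

lemma l2_compare:
  assumes g: "in_l2s s g" and le: "\<And>k. cmod (f k) \<le> c * cmod (g k)" and c: "c \<ge> 0"
  shows "in_l2s s f" "l2s_norm s f \<le> c * l2s_norm s g"
proof -
  have le2: "(wv s f k)\<^sup>2 \<le> c\<^sup>2 * (wv s g k)\<^sup>2" for k
  proof -
    have "wv s f k \<le> c * wv s g k"
      unfolding wv_def using le[of k] jbr_pos[of k]
      by (metis mult.left_commute mult_left_mono powr_ge_zero)
    then show ?thesis using wv_nonneg[of s f k]
      by (metis power_mono power_mult_distrib)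
  qed
  have sg: "(\<lambda>k. c\<^sup>2 * (wv s g k)\<^sup>2) summable_on UNIV"
    using g unfolding in_l2s_wv by (rule summable_on_cmult_right)
  show sf: "in_l2s s f" unfolding in_l2s_wv
    by (rule summable_on_comparison_test[OF sg]) (auto simp: le2)
  have "(l2s_norm s f)\<^sup>2 \<le> (\<Sum>\<^sub>\<infinity>k. c\<^sup>2 * (wv s g k)\<^sup>2)"
    unfolding l2s_norm_sq by (rule infsum_mono) (use sf sg le2 in \<open>auto simp: in_l2s_wv\<close>)
  also have "\<dots> = (c * l2s_norm s g)\<^sup>2"
    by (simp add: infsum_cmult_right' l2s_norm_sq power_mult_distrib)
  finally show "l2s_norm s f \<le> c * l2s_norm s g"
    using c l2s_norm_nonneg[of s g] by (meson power2_le_imp_le mult_nonneg_nonneg)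
qed

lemma l2_minkowski:
  assumes f: "in_l2s s f" and g: "in_l2s s g"
  shows "in_l2s s (\<lambda>k. f k + g k)" "l2s_norm s (\<lambda>k. f k + g k) \<le> l2s_norm s f + l2s_norm s g"
proof -
  let ?a = "wv s f" and ?b = "wv s g"
  have le: "wv s (\<lambda>k. f k + g k) k \<le> ?a k + ?b k" for k
    unfolding wv_def by (metis distrib_left mult_left_mono norm_triangle_ineq powr_ge_zero)
  have sa: "(\<lambda>k. (?a k)\<^sup>2) summable_on UNIV" and sb: "(\<lambda>k. (?b k)\<^sup>2) summable_on UNIV"
    using f g by (auto simp: in_l2s_wv)
  note cs = cs_infsum[of UNIV ?a ?b, OF wv_nonneg wv_nonneg sa sb]
  have sab: "(\<lambda>k. 2 * (?a k * ?b k)) summable_on UNIV"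
    using cs(1) by (rule summable_on_cmult_right)
  have ss: "(\<lambda>k. (?a k)\<^sup>2 + 2 * (?a k * ?b k) + (?b k)\<^sup>2) summable_on UNIV"
    by (intro summable_on_add sa sb sab)
  have le2: "(wv s (\<lambda>k. f k + g k) k)\<^sup>2 \<le> (?a k)\<^sup>2 + 2 * (?a k * ?b k) + (?b k)\<^sup>2" for k
  proof -
    have "(wv s (\<lambda>k. f k + g k) k)\<^sup>2 \<le> (?a k + ?b k)\<^sup>2"
      using le[of k] wv_nonneg[of s "\<lambda>k. f k + g k" k] by (rule power_mono)
    then show ?thesis by (simp add: power2_sum)
  qed
  show sfg: "in_l2s s (\<lambda>k. f k + g k)" unfolding in_l2s_wv
    by (rule summable_on_comparison_test[OF ss]) (auto simp: le2)
  have "(l2s_norm s (\<lambda>k. f k + g k))\<^sup>2 \<le> (\<Sum>\<^sub>\<infinity>k. (?a k)\<^sup>2 + 2 * (?a k * ?b k) + (?b k)\<^sup>2)"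
    unfolding l2s_norm_sq by (rule infsum_mono) (use sfg ss le2 in \<open>auto simp: in_l2s_wv\<close>)
  also have "\<dots> = (\<Sum>\<^sub>\<infinity>k. (?a k)\<^sup>2) + 2 * (\<Sum>\<^sub>\<infinity>k. ?a k * ?b k) + (\<Sum>\<^sub>\<infinity>k. (?b k)\<^sup>2)"
    by (simp add: infsum_add summable_on_add sa sb sab cs(1) infsum_cmult_right')
  also have "\<dots> \<le> (l2s_norm s f)\<^sup>2 + 2 * (l2s_norm s f * l2s_norm s g) + (l2s_norm s g)\<^sup>2"
    using cs(2) l2s_norm_nonneg[of s f] l2s_norm_nonneg[of s g] by (simp add: l2s_norm_sq[symmetric] l2s_norm_wv[symmetric])
  also have "\<dots> = (l2s_norm s f + l2s_norm s g)\<^sup>2" by (simp add: power2_sum)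
  finally show "l2s_norm s (\<lambda>k. f k + g k) \<le> l2s_norm s f + l2s_norm s g"
    using l2s_norm_nonneg[of s f] l2s_norm_nonneg[of s g] by (meson power2_le_imp_le add_nonneg_nonneg)
qed

lemma l2_uminus: "in_l2s s (\<lambda>k. - f k) = in_l2s s f" "l2s_norm s (\<lambda>k. - f k) = l2s_norm s f"
  unfolding in_l2s_def l2s_norm_def by simp_all

lemma l2_cmult:
  assumes "in_l2s s f"
  shows "in_l2s s (\<lambda>k. c * f k)" "l2s_norm s (\<lambda>k. c * f k) \<le> cmod c * l2s_norm s f"
  using l2_compare[OF assms, of "\<lambda>k. c * f k" "cmod c"] by (simp_all add: norm_mult)

lemma l2_diff:
  assumes f: "in_l2s s f" and g: "in_l2s s g"
  shows "in_l2s s (\<lambda>k. f k - g k)" "l2s_norm s (\<lambda>k. f k - g k) \<le> l2s_norm s f + l2s_norm s g"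
  using l2_minkowski[OF f, of "\<lambda>k. - g k"] g by (simp_all add: l2_uminus)

lemma l2_star:
  shows "in_l2s s (star f) = in_l2s s f" "l2s_norm s (star f) = l2s_norm s f"
proof -
  have b: "bij_betw uminus (UNIV::int set) UNIV"
    by (rule bij_betwI[of _ _ _ uminus]) auto
  have e: "(\<lambda>k. (jbr k powr s * cmod (star f k))\<^sup>2) = (\<lambda>k. (jbr (-k) powr s * cmod (f (-k)))\<^sup>2)"
    by (simp add: star_def jbr_minus)
  show "in_l2s s (star f) = in_l2s s f"
    unfolding in_l2s_def e using summable_on_reindex_bij_betw[OF b, of "\<lambda>k. (jbr k powr s * cmod (f k))\<^sup>2"]
    by simp
  show "l2s_norm s (star f) = l2s_norm s f"
    unfolding l2s_norm_def e using infsum_reindex_bij_betw[OF b, of "\<lambda>k. (jbr k powr s * cmod (f k))\<^sup>2"]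
    by simp
qed

lemma jbr_lower: "(1 + \<bar>real_of_int k\<bar>) \<le> sqrt 2 * jbr k"
proof -
  have "(1 + \<bar>real_of_int k\<bar>)\<^sup>2 \<le> 2 * (1 + (real_of_int k)\<^sup>2)"
    using sum_squares_ge_zero[of "1 - \<bar>real_of_int k\<bar>" 0]
    by (simp add: power2_eq_square algebra_simps)
  then have "1 + \<bar>real_of_int k\<bar> \<le> sqrt (2 * (1 + (real_of_int k)\<^sup>2))"
    by (rule real_le_rsqrt)
  also have "sqrt (2 * (1 + (real_of_int k)\<^sup>2)) = sqrt 2 * jbr k"
    unfolding jbr_sqrt by (rule real_sqrt_mult)
  finally show ?thesis .
qed

lemma summable_int_powr:
  assumes p: "p > 1"
  shows "(\<lambda>k::int. jbr k powr (-p)) summable_on UNIV"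
proof -
  define h where "h = (\<lambda>k::int. (sqrt 2) powr p * (1 + \<bar>real_of_int k\<bar>) powr (-p))"
  have le: "jbr k powr (-p) \<le> h k" for k
  proof -
    have "(1 + \<bar>real_of_int k\<bar>) powr p \<le> (sqrt 2 * jbr k) powr p"
      using jbr_lower[of k] p by (intro powr_mono2) auto
    then have "(1 + \<bar>real_of_int k\<bar>) powr p \<le> sqrt 2 powr p * jbr k powr p"
      by (simp add: powr_mult jbr_pos less_imp_le)
    then show ?thesis unfolding h_def using jbr_pos[of k]
      by (simp add: powr_minus field_simps)
  qed
  have sn: "summable (\<lambda>n::nat. (real (Suc n)) powr (-p))"
    using summable_real_powr_iff[of "-p"] p summable_Suc_iff[of "\<lambda>n. real n powr (-p)"] by simp
  have sn': "(\<lambda>n::nat. (1 + real n) powr (-p)) summable_on UNIV"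
    using sn by (subst summable_on_UNIV_nonneg_real_iff) (simp_all add: add.commute)
  have A: "h summable_on (int ` UNIV)"
    by (subst summable_on_reindex) (use sn' in \<open>simp_all add: h_def o_def summable_on_cmult_right\<close>)
  have B: "h summable_on ((\<lambda>n. - int (Suc n)) ` UNIV)"
  proof (subst summable_on_reindex)
    show "inj_on (\<lambda>n. - int (Suc n)) UNIV" by (auto simp: inj_on_def)
    have "(\<lambda>n::nat. (1 + real (Suc n)) powr (-p)) summable_on UNIV"
    proof (rule summable_on_comparison_test[OF sn'])
      fix n :: nat
      show "(1 + real (Suc n)) powr (-p) \<le> (1 + real n) powr (-p)"
        using p by (intro powr_mono2') auto
    qed auto
    then show "(h \<circ> (\<lambda>n. - int (Suc n))) summable_on UNIV"
      unfolding h_def o_def by (intro summable_on_cmult_right) (simp add: add.commute)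
  qed
  have U: "(UNIV::int set) = int ` UNIV \<union> (\<lambda>n. - int (Suc n)) ` UNIV"
  proof -
    { fix k :: int
      have "k \<in> int ` UNIV \<union> (\<lambda>n. - int (Suc n)) ` UNIV"
      proof (cases "k \<ge> 0")
        case True then show ?thesis by (metis UnI1 nonneg_int_cases rangeI)
      next
        case False
        then have "k = - int (Suc (nat (-k - 1)))" by simp
        then show ?thesis by blast
      qed }
    then show ?thesis by auto
  qed
  have "h summable_on UNIV"
    by (subst U, rule summable_on_Un_disjoint[OF A B]) auto
  then show ?thesis
    by (rule summable_on_comparison_test) (auto simp: le)
qed

lemma product_has_sum:
  fixes f :: "'a \<Rightarrow> real" and g :: "'b \<Rightarrow> real"
  assumes f0: "\<And>x. f x \<ge> 0" and g0: "\<And>x. g x \<ge> 0"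
    and fs: "f summable_on UNIV" and gs: "g summable_on UNIV"
  shows "((\<lambda>(a,b). f a * g b) has_sum ((\<Sum>\<^sub>\<infinity>a. f a) * (\<Sum>\<^sub>\<infinity>b. g b))) UNIV"
proof -
  have h1: "((\<lambda>b. f a * g b) has_sum (f a * (\<Sum>\<^sub>\<infinity>b. g b))) UNIV" for a
    by (rule has_sum_cmult_right) (use gs in \<open>simp add: has_sum_infsum\<close>)
  have h2: "((\<lambda>a. f a * (\<Sum>\<^sub>\<infinity>b. g b)) has_sum ((\<Sum>\<^sub>\<infinity>a. f a) * (\<Sum>\<^sub>\<infinity>b. g b))) UNIV"
    by (rule has_sum_cmult_left) (use fs in \<open>simp add: has_sum_infsum\<close>)
  have s: "(\<lambda>(a,b). f a * g b) summable_on Sigma UNIV (\<lambda>_. UNIV)"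
    by (rule summable_on_SigmaI[where g="\<lambda>a. f a * (\<Sum>\<^sub>\<infinity>b. g b)"])
       (use h1 h2 f0 g0 in \<open>auto intro: has_sum_imp_summable\<close>)
  have "((\<lambda>(a,b). f a * g b) has_sum ((\<Sum>\<^sub>\<infinity>a. f a) * (\<Sum>\<^sub>\<infinity>b. g b))) (Sigma UNIV (\<lambda>_. UNIV))"
    by (rule has_sum_SigmaI[OF _ h2 s]) (use h1 in simp)
  then show ?thesis by simp
qed

lemma summable_kappa:
  assumes p: "p > 1"
  shows "((\<lambda>(a,b). (jbr a * jbr b) powr (-p)) has_sum ((\<Sum>\<^sub>\<infinity>k. jbr k powr (-p)))\<^sup>2) UNIV"
  using product_has_sum[of "\<lambda>k. jbr k powr (-p)" "\<lambda>k. jbr k powr (-p)", OF _ _ summable_int_powr[OF p] summable_int_powr[OF p]]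
  by (simp add: powr_mult jbr_pos less_imp_le power2_eq_square case_prod_beta)

definition TL :: "(int \<Rightarrow> int \<Rightarrow> int \<Rightarrow> complex) \<Rightarrow> (int \<Rightarrow> complex) \<Rightarrow> (int \<Rightarrow> complex)
   \<Rightarrow> (int \<Rightarrow> complex) \<Rightarrow> int \<Rightarrow> complex" where
  "TL c f1 f2 f3 n = (\<Sum>\<^sub>\<infinity>(a,b). c n a b * f1 (n - a - b) * f2 a * f3 b)"

lemma triple_has_sum:
  fixes g1 g2 g3 :: "int \<Rightarrow> real"
  assumes n1: "\<And>k. g1 k \<ge> 0" and n2: "\<And>k. g2 k \<ge> 0" and n3: "\<And>k. g3 k \<ge> 0"
    and s1: "g1 summable_on UNIV" and s2: "g2 summable_on UNIV" and s3: "g3 summable_on UNIV"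
  shows "((\<lambda>(n,(a,b)). g1 (n - a - b) * (g2 a * g3 b)) has_sum
           ((\<Sum>\<^sub>\<infinity>k. g1 k) * ((\<Sum>\<^sub>\<infinity>k. g2 k) * (\<Sum>\<^sub>\<infinity>k. g3 k)))) UNIV"
proof -
  have p23: "((\<lambda>(a,b). g2 a * g3 b) has_sum ((\<Sum>\<^sub>\<infinity>k. g2 k) * (\<Sum>\<^sub>\<infinity>k. g3 k))) UNIV"
    by (rule product_has_sum[OF n2 n3 s2 s3])
  then have s23: "(\<lambda>(a,b). g2 a * g3 b) summable_on UNIV" and
    e23: "(\<Sum>\<^sub>\<infinity>(a,b). g2 a * g3 b) = (\<Sum>\<^sub>\<infinity>k. g2 k) * (\<Sum>\<^sub>\<infinity>k. g3 k)"
    by (auto intro: has_sum_imp_summable infsumI)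
  have p: "((\<lambda>(x,ab). g1 x * (\<lambda>(a,b). g2 a * g3 b) ab) has_sum
           ((\<Sum>\<^sub>\<infinity>k. g1 k) * ((\<Sum>\<^sub>\<infinity>k. g2 k) * (\<Sum>\<^sub>\<infinity>k. g3 k)))) UNIV"
    using product_has_sum[of g1 "\<lambda>(a,b). g2 a * g3 b", OF n1 _ s1 s23] n2 n3 e23
    by (auto simp: case_prod_unfold)
  show ?thesis
  proof (subst has_sum_reindex_bij_witness[where i="\<lambda>(x,(a,b)). (x + a + b,(a,b))" and j="\<lambda>(n,(a,b)). (n - a - b,(a,b))" and T=UNIV
        and h="\<lambda>(x,ab). g1 x * (\<lambda>(a,b). g2 a * g3 b) ab" and s'="((\<Sum>\<^sub>\<infinity>k. g1 k) * ((\<Sum>\<^sub>\<infinity>k. g2 k) * (\<Sum>\<^sub>\<infinity>k. g3 k)))"])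
  qed (use p in auto)
qed

lemma TRI:
  fixes c :: "int \<Rightarrow> int \<Rightarrow> int \<Rightarrow> complex" and \<kappa> :: "int \<Rightarrow> int \<Rightarrow> real"
  assumes k0: "\<And>a b. \<kappa> a b \<ge> 0"
    and ks: "((\<lambda>(a,b). (\<kappa> a b)\<^sup>2) has_sum K) UNIV"
    and cb: "\<And>n a b. cmod (c n a b) * jbr n powr s \<le> \<kappa> a b * (jbr (n-a-b) powr s * (jbr a powr s * jbr b powr s))"
    and f1: "in_l2s s f1" and f2: "in_l2s s f2" and f3: "in_l2s s f3"
  shows "(\<lambda>(a,b). c n a b * f1 (n-a-b) * f2 a * f3 b) summable_on UNIV"
    and "in_l2s s (TL c f1 f2 f3)"
    and "l2s_norm s (TL c f1 f2 f3) \<le> sqrt K * (l2s_norm s f1 * (l2s_norm s f2 * l2s_norm s f3))"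
proof -
  define g1 where "g1 = (\<lambda>k. (wv s f1 k)\<^sup>2)"
  define g2 where "g2 = (\<lambda>k. (wv s f2 k)\<^sup>2)"
  define g3 where "g3 = (\<lambda>k. (wv s f3 k)\<^sup>2)"
  define G where "G = (\<Sum>\<^sub>\<infinity>k. g1 k) * ((\<Sum>\<^sub>\<infinity>k. g2 k) * (\<Sum>\<^sub>\<infinity>k. g3 k))"
  have K0: "K \<ge> 0" using ks by (rule has_sum_nonneg) (simp add: case_prod_beta)
  have eK: "(\<Sum>\<^sub>\<infinity>(a,b). (\<kappa> a b)\<^sup>2) = K" using ks by (rule infsumI)
  have sK: "(\<lambda>(a,b). (\<kappa> a b)\<^sup>2) summable_on UNIV" using ks by (rule has_sum_imp_summable)
  have trip: "((\<lambda>(n,(a,b)). g1 (n - a - b) * (g2 a * g3 b)) has_sum G) UNIV"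
    unfolding G_def
    by (rule triple_has_sum) (use f1 f2 f3 in \<open>auto simp: g1_def g2_def g3_def in_l2s_wv\<close>)
  define hh where "hh = (\<lambda>n (a,b). wv s f1 (n-a-b) * (wv s f2 a * wv s f3 b))"
  have hh0: "hh n ab \<ge> 0" for n ab
    unfolding hh_def by (simp add: case_prod_beta wv_nonneg)
  have hhsq: "(hh n ab)\<^sup>2 = (\<lambda>(a,b). g1 (n - a - b) * (g2 a * g3 b)) ab" for n ab
    unfolding hh_def g1_def g2_def g3_def by (simp add: case_prod_beta power_mult_distrib)
  have trip': "((\<lambda>(n,ab). (hh n ab)\<^sup>2) has_sum G) (Sigma UNIV (\<lambda>_. UNIV))"
    using trip by (simp add: hhsq case_prod_unfold)
  have hs: "(\<lambda>ab. (hh n ab)\<^sup>2) summable_on UNIV" for n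
    using summable_on_SigmaD1[of "\<lambda>n ab. (hh n ab)\<^sup>2" UNIV "\<lambda>_. UNIV" n] trip'
    by (auto intro: has_sum_imp_summable)
  define H where "H = (\<lambda>n. \<Sum>\<^sub>\<infinity>ab. (hh n ab)\<^sup>2)"
  have HG: "(H has_sum G) UNIV"
    unfolding H_def
    by (rule has_sum_SigmaD[OF trip']) (use hs in \<open>auto intro: has_sum_infsum\<close>)
  have H0: "H n \<ge> 0" for n unfolding H_def by (simp add: infsum_nonneg)
  define T where "T = (\<lambda>n (a,b). c n a b * f1 (n-a-b) * f2 a * f3 b)"
  have Tb: "cmod (T n ab) \<le> (\<lambda>(a,b). \<kappa> a b) ab * hh n ab / jbr n powr s" for n ab
  proof -
    obtain a b where ab: "ab = (a,b)" by fastforce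
    have "cmod (T n ab) * jbr n powr s = (cmod (c n a b) * jbr n powr s) * (cmod (f1 (n-a-b)) * cmod (f2 a) * cmod (f3 b))"
      unfolding T_def ab by (simp add: norm_mult)
    also have "\<dots> \<le> (\<kappa> a b * (jbr (n-a-b) powr s * (jbr a powr s * jbr b powr s))) * (cmod (f1 (n-a-b)) * cmod (f2 a) * cmod (f3 b))"
      by (rule mult_right_mono[OF cb]) simp
    also have "\<dots> = \<kappa> a b * hh n ab"
      unfolding hh_def ab wv_def by simp
    finally show ?thesis using jbr_pos[of n] ab by (simp add: field_simps)
  qed
  have CS: "(\<lambda>ab. (\<lambda>(a,b). \<kappa> a b) ab * hh n ab) summable_on UNIV"
     "(\<Sum>\<^sub>\<infinity>ab. (\<lambda>(a,b). \<kappa> a b) ab * hh n ab) \<le> sqrt K * sqrt (H n)" for n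
  proof -
    have sK': "(\<lambda>ab. ((\<lambda>(a,b). \<kappa> a b) ab)\<^sup>2) summable_on UNIV" using sK by (simp add: case_prod_unfold)
    have eK': "(\<Sum>\<^sub>\<infinity>ab. ((\<lambda>(a,b). \<kappa> a b) ab)\<^sup>2) = K" using eK by (simp add: case_prod_unfold)
    note c = cs_infsum[of UNIV "\<lambda>(a,b). \<kappa> a b" "hh n", OF _ _ sK' hs[of n]]
    show "(\<lambda>ab. (\<lambda>(a,b). \<kappa> a b) ab * hh n ab) summable_on UNIV"
      using c(1) k0 hh0 by (simp add: case_prod_beta)
    show "(\<Sum>\<^sub>\<infinity>ab. (\<lambda>(a,b). \<kappa> a b) ab * hh n ab) \<le> sqrt K * sqrt (H n)"
      using c(2) k0 hh0 eK' by (simp add: case_prod_beta H_def)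
  qed
  have CS': "(\<lambda>ab. (\<lambda>(a,b). \<kappa> a b) ab * hh n ab / jbr n powr s) summable_on UNIV" for n
    using summable_on_cmult_left[OF CS(1)[of n], of "1 / jbr n powr s"] by simp
  have Tabs: "(\<lambda>ab. norm (T n ab)) summable_on UNIV" for n
    by (rule Infinite_Sum.abs_summable_on_comparison_test'[OF CS'[of n]]) (use Tb in auto)
  show "(\<lambda>(a,b). c n a b * f1 (n-a-b) * f2 a * f3 b) summable_on UNIV"
    using abs_summable_summable[OF Tabs[of n]] unfolding T_def .
  have TLb: "wv s (TL c f1 f2 f3) n \<le> sqrt K * sqrt (H n)" for n
  proof -
    have eT: "TL c f1 f2 f3 n = infsum (T n) UNIV" by (simp add: TL_def T_def)
    have "cmod (TL c f1 f2 f3 n) \<le> (\<Sum>\<^sub>\<infinity>ab. cmod (T n ab))"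
      unfolding eT using Tabs[of n] by (rule norm_infsum_bound)
    also have "\<dots> \<le> (\<Sum>\<^sub>\<infinity>ab. (\<lambda>(a,b). \<kappa> a b) ab * hh n ab / jbr n powr s)"
      by (rule infsum_mono) (use Tabs[of n] CS'[of n] Tb in auto)
    also have "\<dots> = (\<Sum>\<^sub>\<infinity>ab. (\<lambda>(a,b). \<kappa> a b) ab * hh n ab) / jbr n powr s"
      using infsum_cmult_left'[of "\<lambda>ab. (\<lambda>(a,b). \<kappa> a b) ab * hh n ab" "1 / jbr n powr s" UNIV] by simp
    also have "\<dots> \<le> sqrt K * sqrt (H n) / jbr n powr s"
      using CS(2)[of n] jbr_pos[of n] by (simp add: divide_right_mono)
    finally show ?thesis unfolding wv_def using jbr_pos[of n] by (simp add: field_simps)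
  qed
  have sq: "(wv s (TL c f1 f2 f3) n)\<^sup>2 \<le> K * H n" for n
  proof -
    have "(wv s (TL c f1 f2 f3) n)\<^sup>2 \<le> (sqrt K * sqrt (H n))\<^sup>2"
      using TLb[of n] wv_nonneg by (rule power_mono)
    then show ?thesis using K0 H0[of n] by (simp add: power_mult_distrib)
  qed
  have KH: "((\<lambda>n. K * H n) has_sum (K * G)) UNIV" using HG by (rule has_sum_cmult_right)
  show inl: "in_l2s s (TL c f1 f2 f3)" unfolding in_l2s_wv
    by (rule summable_on_comparison_test[OF has_sum_imp_summable[OF KH]]) (use sq in auto)
  have "(l2s_norm s (TL c f1 f2 f3))\<^sup>2 \<le> K * G"
    unfolding l2s_norm_sq infsumI[OF KH, symmetric]
    by (rule infsum_mono) (use inl sq has_sum_imp_summable[OF KH] in \<open>auto simp: in_l2s_wv\<close>)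
  moreover have "K * G = (sqrt K * (l2s_norm s f1 * (l2s_norm s f2 * l2s_norm s f3)))\<^sup>2"
    unfolding G_def g1_def g2_def g3_def using K0
    by (simp add: l2s_norm_sq power_mult_distrib)
  ultimately show "l2s_norm s (TL c f1 f2 f3) \<le> sqrt K * (l2s_norm s f1 * (l2s_norm s f2 * l2s_norm s f3))"
  proof -
    assume a: "(l2s_norm s (TL c f1 f2 f3))\<^sup>2 \<le> K * G" and b: "K * G = (sqrt K * (l2s_norm s f1 * (l2s_norm s f2 * l2s_norm s f3)))\<^sup>2"
    have "0 \<le> sqrt K * (l2s_norm s f1 * (l2s_norm s f2 * l2s_norm s f3))"
      using K0 by (simp add: l2s_norm_nonneg)
    then show ?thesis using a b power2_le_imp_le by metis
  qed
qed

lemma mm: fixes x X y Y :: int shows "0 \<le> x \<Longrightarrow> x \<le> X \<Longrightarrow> 0 \<le> y \<Longrightarrow> y \<le> Y \<Longrightarrow> x * y \<le> X * Y"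
  by (meson mult_mono order_trans)

lemma L3a: fixes n a b n1 :: int assumes "n > 0" "b > 0" "\<bar>a\<bar> > b" "n1 \<ge> n" "n \<noteq> b"
  shows "n^2*((1+\<bar>a\<bar>)*(1+b)) \<le> 64*(n-b)^2*n1^2*a^2"
proof -
  have 1: "(1+\<bar>a\<bar>)*(1+b) \<le> (2*\<bar>a\<bar>)*(2*\<bar>a\<bar>)" by (rule mm) (use assms in auto)
  have 2: "n^2 \<le> n1^2" using assms by (simp add: power_mono)
  have 3: "(n-b)^2 \<ge> 1" using assms(5) power2_ge_1_iff by fastforce
  have "n^2*((1+\<bar>a\<bar>)*(1+b)) \<le> n1^2 * ((2*\<bar>a\<bar>)*(2*\<bar>a\<bar>))"
    by (rule mm) (use 1 2 assms in auto)
  also have "\<dots> = 4 * (1 * n1^2 * a^2)" by (simp add: power2_eq_square)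
  also have "\<dots> \<le> 64 * ((n-b)^2 * n1^2 * a^2)" using 3 by (intro mm) (auto intro!: mult_right_mono)
  finally show ?thesis by simp
qed

lemma L2a: fixes n a d :: int assumes n: "n > 0" and a: "a > 0" and na: "n \<noteq> a" and d: "d \<ge> 1"
  shows "n^2*((1+a)*(1+a+d)) \<le> 64*((n-a)^2*(n+d)^2*a^2)"
proof -
  have X0: "0 \<le> (n-a)^2*(n+d)^2*a^2" by simp
  show ?thesis
proof (cases "a \<ge> 2*n")
  case True
  have 1: "a^2 \<le> 4*(n-a)^2"
  proof -
    have "a \<le> 2 * \<bar>n-a\<bar>" using True n by arith
    then have "a^2 \<le> (2*\<bar>n-a\<bar>)^2" using a by (intro power_mono) auto
    then show ?thesis by (simp add: power_mult_distrib)
  qed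
  have 2: "n^2 \<le> a^2" using True n by (intro power_mono) auto
  have 3: "(1+a)*(1+a+d) \<le> (2*a)*(2*(a*(n+d)))"
  proof (rule mm)
    have x: "a*(n+d) \<ge> 1*(n+d)" using a n d by (intro mult_right_mono) auto
    have y: "a*(n+d) \<ge> a*1" using a n d by (intro mult_left_mono) auto
    show "1+a+d \<le> 2*(a*(n+d))" using x y n by (smt (verit))
  qed (use a d in auto)
  have "n^2*((1+a)*(1+a+d)) \<le> a^2*((2*a)*(2*(a*(n+d))))"
    by (rule mm) (use 2 3 a d n in auto)
  also have "\<dots> = 4*(a^2*a^2*(n+d))" by (simp add: power2_eq_square)
  also have "\<dots> \<le> 16*((n-a)^2*(n+d)^2*a^2)"
  proof -
    have "a^2*a^2*(n+d) \<le> (4*(n-a)^2)*a^2*(n+d)^2"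
      using 1 n d by (intro mm) (auto simp: power2_eq_square intro!: mult_right_mono)
    then show ?thesis by (simp add: mult_ac)
  qed
  finally show ?thesis using X0 by linarith
next
  case False
  show ?thesis
  proof (cases "2*a \<le> n")
    case True
    have 1: "n^2 \<le> 4*(n-a)^2"
    proof -
      have "n \<le> 2 * \<bar>n-a\<bar>" using True a by arith
      then have "n^2 \<le> (2*\<bar>n-a\<bar>)^2" using n by (intro power_mono) auto
      then show ?thesis by (simp add: power_mult_distrib)
    qed
    have 3: "(1+a)*(1+a+d) \<le> (2*a^2)*((n+d)^2)"
    proof (rule mm)
      show "1+a \<le> 2*a^2" using a by (simp add: power2_eq_square) (smt (verit) mult_le_cancel_left1)
      have "n + d \<le> (n+d)^2" using n d by (simp add: power2_eq_square)
      then show "1+a+d \<le> (n+d)^2" using True a by arith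
    qed (use a d in auto)
    have "n^2*((1+a)*(1+a+d)) \<le> (4*(n-a)^2)*((2*a^2)*((n+d)^2))"
      by (rule mm) (use 1 3 a d n in auto)
    also have "\<dots> = 8*((n-a)^2*(n+d)^2*a^2)" by simp
    finally show ?thesis using X0 by linarith
  next
    case False2: False
    have 1: "n^2 \<le> (2*a)^2" using False2 n by (intro power_mono) auto
    have 3: "(1+a)*(1+a+d) \<le> (4*(n+d))*(2*(n+d))"
      by (rule mm) (use False False2 a d n in auto)
    have 4: "(n-a)^2 \<ge> 1" using na power2_ge_1_iff by fastforce
    have "n^2*((1+a)*(1+a+d)) \<le> (2*a)^2*((4*(n+d))*(2*(n+d)))"
      by (rule mm) (use 1 3 a d n in auto)
    also have "\<dots> = 32*(1*(n+d)^2*a^2)" by (simp add: power2_eq_square algebra_simps)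
    also have "\<dots> \<le> 64*((n-a)^2*(n+d)^2*a^2)" using 4 by (intro mm) (auto intro!: mult_right_mono)
    finally show ?thesis by simp
  qed
qed
qed


lemma B1c2: fixes n a :: int assumes "n > 0" "a > 0" "n \<noteq> a" shows "n \<le> 2 * a * \<bar>n - a\<bar>"
  by (smt (verit, ccfv_SIG) assms(1,2,3) mult_le_cancel_left1
    mult_le_cancel_right1 mult_le_cancel_right2 mult_less_cancel_right1
    right_diff_distrib')

lemma supp:
  assumes "m1t n (n-a-b) a b \<noteq> 0"
  shows "n > 0" "a + b < 0" "b \<noteq> 0" "n \<noteq> a" "n \<noteq> b"
proof -
  have A: "(n - a - b + a) * (n - a - b + b) \<noteq> 0" "m1 n (n-a-b) a b \<noteq> 0"
    using assms unfolding m1t_def by (auto split: if_splits)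
  from A(2) show "n > 0" "a + b < 0" "b \<noteq> 0" unfolding m1_def by (auto split: if_splits)
  from A(1) show "n \<noteq> a" "n \<noteq> b" by auto
qed

definition hh2 :: "int \<Rightarrow> int" where "hh2 a = (if a = 0 then 1 else \<bar>a\<bar>)"

lemma hh2_ge1: "hh2 a \<ge> 1" unfolding hh2_def by auto

lemma cmod_hatn: "cmod (hatn a) = real_of_int (hh2 a)"
  unfolding hatn_def hh2_def by auto

lemma cmod_m1t:
  assumes "m1t n (n-a-b) a b \<noteq> 0"
  shows "cmod (m1t n (n-a-b) a b) = 2 * real_of_int (n * \<bar>a+b\<bar>) / (real_of_int (n-a-b) * real_of_int (hh2 a))"
proof -
  note S = supp[OF assms]
  have n1: "n - a - b > 0" using S by linarith
  have e: "m1t n (n-a-b) a b = 2 * \<i> * of_int (n * (a + b)) / (hatn (n-a-b) * hatn a)"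
    using assms unfolding m1t_def m1_def by (auto split: if_splits)
  have h1: "cmod (hatn (n-a-b)) = real_of_int (n-a-b)"
  proof -
    have "hatn (n-a-b) = of_int (n-a-b)" using n1 by (simp add: hatn_def)
    then have "cmod (hatn (n-a-b)) = \<bar>real_of_int (n-a-b)\<bar>" by (simp only: norm_of_int)
    then show ?thesis using n1 by simp
  qed
  have "cmod (m1t n (n-a-b) a b) = 2 * 1 * \<bar>real_of_int (n * (a + b))\<bar> / (cmod (hatn (n-a-b)) * cmod (hatn a))"
    unfolding e by (simp only: norm_divide norm_mult norm_of_int norm_ii norm_numeral)
  also have "\<dots> = 2 * real_of_int (n * \<bar>a+b\<bar>) / (real_of_int (n-a-b) * real_of_int (hh2 a))"
    using h1 S(1) by (simp add: abs_mult cmod_hatn[of a])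
  finally show ?thesis .
qed

lemma INT:
  fixes n a b :: int
  assumes n: "n > 0" and ab: "a + b < 0" and b: "b \<noteq> 0" and na: "n \<noteq> a" and nb: "n \<noteq> b"
  defines "n1 \<equiv> n - a - b" and "P \<equiv> \<bar>Phi n (n - a - b) a b\<bar>" and "Q \<equiv> n * \<bar>a + b\<bar>"
  shows "P > 0" "Q \<le> P * hh2 a" "4 * Q^2 * ((1 + \<bar>a\<bar>) * (1 + \<bar>b\<bar>)) \<le> 64 * (P^2 * n1^2 * (hh2 a)^2)"
    "P \<le> 4 * (n1^2 * ((1 + a^2) * (1 + b^2)))" "n < n1"
proof -
  have n1p: "n1 > n" unfolding n1_def using ab by linarith
  show "n < n1" by (rule n1p)
  have Phi: "Phi n (n-a-b) a b = n^2 - n1^2 - a * \<bar>a\<bar> - b * \<bar>b\<bar>"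
    unfolding Phi_def n1_def[symmetric] using n n1p by (simp add: power2_eq_square)
  show "P \<le> 4 * (n1^2 * ((1 + a^2) * (1 + b^2)))"
  proof -
    have E: "x^2 \<le> n1^2 * ((1 + a^2) * (1 + b^2))" if "\<bar>x\<bar> \<le> n1 \<or> \<bar>x\<bar> \<le> \<bar>a\<bar> \<or> \<bar>x\<bar> \<le> \<bar>b\<bar>" for x
    proof -
      have 1: "1 \<le> n1^2" using n n1p by (simp add: power2_ge_1_iff)
      have "x^2 \<le> n1^2 \<or> x^2 \<le> 1 + a^2 \<or> x^2 \<le> 1 + b^2"
      proof -
        have "\<bar>x\<bar> \<le> \<bar>n1\<bar> \<or> \<bar>x\<bar> \<le> \<bar>a\<bar> \<or> \<bar>x\<bar> \<le> \<bar>b\<bar>" using that n n1p by auto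
        then have "x^2 \<le> n1^2 \<or> x^2 \<le> a^2 \<or> x^2 \<le> b^2" by (simp add: abs_le_square_iff)
        then show ?thesis by auto
      qed
      moreover have "n1^2 \<le> n1^2 * ((1 + a^2) * (1 + b^2))"
      proof -
        have "n1^2 * (1 * 1) \<le> n1^2 * ((1 + a^2) * (1 + b^2))"
          by (intro mult_left_mono mult_mono) auto
        then show ?thesis by simp
      qed
      moreover have "1 + a^2 \<le> n1^2 * ((1 + a^2) * (1 + b^2))"
      proof -
        have "1 * ((1 + a^2) * 1) \<le> n1^2 * ((1 + a^2) * (1 + b^2))"
          using 1 by (intro mult_mono) auto
        then show ?thesis by simp
      qed
      moreover have "1 + b^2 \<le> n1^2 * ((1 + a^2) * (1 + b^2))"
      proof -
        have "1 * (1 * (1 + b^2)) \<le> n1^2 * ((1 + a^2) * (1 + b^2))"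
          using 1 by (intro mult_mono) auto
        then show ?thesis by simp
      qed
      ultimately show ?thesis by linarith
    qed
    have "P \<le> n^2 + n1^2 + a^2 + b^2"
    proof -
      have "\<bar>a * \<bar>a\<bar>\<bar> = a^2" "\<bar>b * \<bar>b\<bar>\<bar> = b^2" by (simp_all add: abs_mult power2_eq_square)
      then show ?thesis unfolding P_def Phi
        by (smt (verit) zero_le_power2[of n] zero_le_power2[of n1] zero_le_power2[of a] zero_le_power2[of b])
    qed
    moreover have "n^2 \<le> n1^2 * ((1 + a^2) * (1 + b^2))" using E[of n] n n1p by auto
    moreover have "n1^2 \<le> n1^2 * ((1 + a^2) * (1 + b^2))" using E[of n1] n n1p by auto
    moreover have "a^2 \<le> n1^2 * ((1 + a^2) * (1 + b^2))" using E[of a] by auto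
    moreover have "b^2 \<le> n1^2 * ((1 + a^2) * (1 + b^2))" using E[of b] by auto
    ultimately show ?thesis by linarith
  qed
  have "P > 0 \<and> Q \<le> P * hh2 a \<and> 4 * Q^2 * ((1 + \<bar>a\<bar>) * (1 + \<bar>b\<bar>)) \<le> 64 * (P^2 * n1^2 * (hh2 a)^2)"
  proof (cases "b < 0")
    case bneg: True
    show ?thesis
    proof (cases "a \<le> 0")
      case True
      have ab0: "a * b \<ge> 0" using True bneg by (simp add: mult_nonpos_nonpos)
      have Phe: "Phi n (n-a-b) a b = 2*(n*(a+b)) - 2*(a*b)"
        unfolding Phi n1_def using True bneg by (simp add: abs_of_nonpos abs_of_neg power2_eq_square algebra_simps)
      have nab: "n*(a+b) < 0" using n ab by (simp add: mult_pos_neg)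
      have Qe: "Q = - (n*(a+b))" unfolding Q_def using n ab by (simp add: algebra_simps)
      have Pe: "P = 2 * Q + 2 * (a * b)"
        unfolding P_def Phe Qe using nab ab0 by simp
      have Q0: "Q > 0" unfolding Q_def using n ab by simp
      have PQ: "2 * Q \<le> P" using Pe ab0 by linarith
      have h: "1 \<le> hh2 a" by (rule hh2_ge1)
      have a1: "1 + \<bar>a\<bar> \<le> 2 * hh2 a" unfolding hh2_def by auto
      have b1: "1 + \<bar>b\<bar> \<le> n1" unfolding n1_def using True bneg n by linarith
      have QP: "4 * Q^2 \<le> P^2"
      proof -
        have "(2*Q)^2 \<le> P^2" using PQ Q0 by (intro power_mono) auto
        then show ?thesis by (simp add: power_mult_distrib)
      qed
      have "4 * Q^2 * ((1 + \<bar>a\<bar>) * (1 + \<bar>b\<bar>)) \<le> P^2 * ((2 * hh2 a) * n1)"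
      proof (rule mm)
        show "4 * Q^2 \<le> P^2" by (rule QP)
        show "(1 + \<bar>a\<bar>) * (1 + \<bar>b\<bar>) \<le> 2 * hh2 a * n1" by (rule mm) (use a1 b1 in auto)
      qed auto
      also have "\<dots> \<le> P^2 * (64 * (n1^2 * (hh2 a)^2))"
      proof (rule mult_left_mono)
        have "2 * hh2 a * n1 \<le> 64 * hh2 a * n1" using h n1p n by simp
        also have "\<dots> \<le> 64 * (hh2 a * hh2 a) * (n1 * n1)" using h n1p n
          by (intro mult_mono) auto
        finally show "2 * hh2 a * n1 \<le> 64 * (n1^2 * (hh2 a)^2)" by (simp add: power2_eq_square ac_simps)
      qed simp
      finally have B: "4 * Q^2 * ((1 + \<bar>a\<bar>) * (1 + \<bar>b\<bar>)) \<le> 64 * (P^2 * n1^2 * (hh2 a)^2)"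
        by (simp add: ac_simps)
      have "P * 1 \<le> P * hh2 a" using h PQ Q0 by (intro mult_left_mono) auto
      then have Q1: "Q \<le> P * hh2 a" using PQ Q0 by linarith
      show ?thesis using B Q1 PQ Q0 by auto
    next
      case False
      define d where "d = - (a + b)"
      have d1: "d \<ge> 1" unfolding d_def using ab by linarith
      have Phe: "Phi n (n-a-b) a b = 2 * (a+b) * (n-a)"
        unfolding Phi n1_def using False bneg by (simp add: abs_of_pos abs_of_neg power2_eq_square algebra_simps)
      have Pe: "P = 2 * d * \<bar>n - a\<bar>"
        unfolding P_def Phe d_def using ab by (simp add: abs_mult)
      have Qe: "Q = n * d" unfolding Q_def d_def using ab by simp
      have ha: "hh2 a = a" unfolding hh2_def using False by simp
      have P0: "P > 0" using Pe d1 na by simp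
      have "n \<le> 2 * a * \<bar>n - a\<bar>" using B1c2[of n a] n False na by simp
      then have "n * d \<le> (2 * a * \<bar>n - a\<bar>) * d" using d1 by (intro mult_right_mono) auto
      then have Q1: "Q \<le> P * hh2 a" using Qe Pe ha by (simp add: ac_simps)
      have L: "n^2*((1+a)*(1+a+d)) \<le> 64*((n-a)^2*(n+d)^2*a^2)"
        using L2a[of n a d] n False na d1 by simp
      have "4 * Q^2 * ((1 + \<bar>a\<bar>) * (1 + \<bar>b\<bar>)) = (4 * d^2) * (n^2*((1+a)*(1+a+d)))"
        unfolding Qe d_def using False bneg by (simp add: power2_eq_square algebra_simps)
      also have "\<dots> \<le> (4 * d^2) * (64*((n-a)^2*(n+d)^2*a^2))"
        using L by (intro mult_left_mono) auto
      also have "\<dots> = 64 * (P^2 * n1^2 * (hh2 a)^2)"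
        unfolding Pe ha n1_def d_def by (simp add: power2_eq_square algebra_simps)
      finally show ?thesis using P0 Q1 by simp
    qed
  next
    case False
    then have bpos: "b > 0" using b by simp
    have aneg: "a < 0" using bpos ab by simp
    define d where "d = - (a + b)"
    have d1: "d \<ge> 1" unfolding d_def using ab by linarith
    have Phe: "Phi n (n-a-b) a b = 2 * (a+b) * (n-b)"
      unfolding Phi n1_def using aneg bpos by (simp add: abs_of_pos abs_of_neg power2_eq_square algebra_simps)
    have Pe: "P = 2 * d * \<bar>n - b\<bar>"
      unfolding P_def Phe d_def using ab by (simp add: abs_mult)
    have Qe: "Q = n * d" unfolding Q_def d_def using ab by simp
    have ha: "hh2 a = \<bar>a\<bar>" unfolding hh2_def using aneg by simp
    have P0: "P > 0" using Pe d1 nb by simp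
    have "n \<le> 2 * b * \<bar>n - b\<bar>" using B1c2[of n b] n bpos nb by simp
    also have "\<dots> \<le> 2 * \<bar>a\<bar> * \<bar>n - b\<bar>" using ab bpos aneg by (intro mult_right_mono) auto
    finally have "n * d \<le> (2 * \<bar>a\<bar> * \<bar>n - b\<bar>) * d" using d1 by (intro mult_right_mono) auto
    then have Q1: "Q \<le> P * hh2 a" using Qe Pe ha by (simp add: ac_simps)
    have L: "n^2*((1+\<bar>a\<bar>)*(1+b)) \<le> 64*(n-b)^2*n1^2*a^2"
      using L3a[of n b a n1] n bpos ab aneg nb n1p by simp
    have "4 * Q^2 * ((1 + \<bar>a\<bar>) * (1 + \<bar>b\<bar>)) = (4 * d^2) * (n^2*((1+\<bar>a\<bar>)*(1+b)))"
      unfolding Qe using bpos by (simp add: power2_eq_square algebra_simps)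
    also have "\<dots> \<le> (4 * d^2) * (64*(n-b)^2*n1^2*a^2)"
      using L by (intro mult_left_mono) auto
    also have "\<dots> = 64 * (P^2 * n1^2 * (hh2 a)^2)"
      unfolding Pe ha by (simp add: power2_eq_square algebra_simps)
    finally show ?thesis using P0 Q1 by simp
  qed
  then show "P > 0" "Q \<le> P * hh2 a" "4 * Q^2 * ((1 + \<bar>a\<bar>) * (1 + \<bar>b\<bar>)) \<le> 64 * (P^2 * n1^2 * (hh2 a)^2)"
    by auto
qed

lemma jbr_sq: "(jbr a)^2 = 1 + (real_of_int a)^2"
  unfolding jbr_sqrt by simp

lemma alg6: fixes A B C D E F :: real assumes "B \<noteq> 0" "D \<noteq> 0"
  shows "(A/B * (C/D)) * (E*(B*F)) = (A*E*C) * ((B/B)*(F/D))"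
  using assms by (simp add: field_simps)

lemma interp:
  fixes x n1 J P g :: real
  assumes x0: "x > 0" and n1: "n1 \<ge> 1" and J: "J \<ge> 1" and g0: "g > 0" and g1: "g \<le> 1/4"
    and B1: "x * n1 \<le> 2" and B2: "x^2 * J \<le> 64" and P0: "P > 0" and B3: "P \<le> 4 * (n1^2 * J^2)"
  shows "x * P powr g \<le> (2 powr (2*g) * 4 powr g * 64 powr (1/2 - g)) * J powr (3*g - 1/2)"
proof -
  have e1: "x = x powr (2*g) * (x^2) powr (1/2 - g)"
  proof -
    have "x^2 = x powr 2" using x0 by (simp add: powr_numeral)
    then have "(x^2) powr (1/2 - g) = x powr (2 * (1/2 - g))"
      by (simp add: powr_powr)
    then have "x powr (2*g) * (x^2) powr (1/2 - g) = x powr (2*g + 2 * (1/2 - g))"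
      by (simp only: powr_add)
    also have "\<dots> = x" using x0 by (simp add: algebra_simps)
    finally show ?thesis by simp
  qed
  have x1: "x powr (2*g) \<le> (2/n1) powr (2*g)"
    using x0 g0 B1 n1 by (intro powr_mono2) (auto simp: field_simps)
  have x2: "(x^2) powr (1/2 - g) \<le> (64/J) powr (1/2 - g)"
    using x0 g1 B2 J by (intro powr_mono2) (auto simp: field_simps)
  have p1: "P powr g \<le> (4 * (n1^2 * J^2)) powr g"
    using P0 g0 B3 by (intro powr_mono2) auto
  have "x * P powr g \<le> ((2/n1) powr (2*g) * (64/J) powr (1/2 - g)) * (4 * (n1^2 * J^2)) powr g"
    apply (subst e1)
    apply (rule mult_mono)
      apply (rule mult_mono[OF x1 x2])
    using p1 by auto
  also have "\<dots> = (2 powr (2*g) * 4 powr g * 64 powr (1/2 - g)) *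
        ((n1 powr (2*g) / n1 powr (2*g)) * (J powr (2*g) / J powr (1/2 - g)))"
  proof -
    have a: "(2/n1) powr (2*g) = 2 powr (2*g) / n1 powr (2*g)" using n1 by (simp add: powr_divide)
    have b: "(64/J) powr (1/2 - g) = 64 powr (1/2 - g) / J powr (1/2 - g)" using J by (simp add: powr_divide)
    have c: "(4 * (n1^2 * J^2)) powr g = 4 powr g * (n1 powr (2*g) * J powr (2*g))"
    proof -
      have sq: "(y^2) powr g = y powr (2*g)" if "y \<ge> 1" for y :: real
      proof -
        have "(y^2) powr g = y powr g * y powr g" using that by (simp add: power2_eq_square powr_mult)
        also have "\<dots> = y powr (2*g)" by (simp only: powr_add[symmetric] mult_2)
        finally show ?thesis .
      qed
      have "(n1^2) powr g = n1 powr (2*g)" "(J^2) powr g = J powr (2*g)"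
        using sq n1 J by auto
      then show ?thesis using n1 J by (simp add: powr_mult)
    qed
    have B: "n1 powr (2*g) \<noteq> 0" "J powr (1/2 - g) \<noteq> 0" using n1 J by auto
    show ?thesis unfolding a b c using alg6[OF B] by simp
  qed
  also have "\<dots> = (2 powr (2*g) * 4 powr g * 64 powr (1/2 - g)) * J powr (3*g - 1/2)"
  proof -
    have "n1 powr (2*g) / n1 powr (2*g) = 1" using n1 by simp
    moreover have "J powr (2*g) / J powr (1/2 - g) = J powr (3*g - 1/2)"
      using J by (simp add: powr_diff[symmetric] algebra_simps)
    ultimately show ?thesis by simp
  qed
  finally show ?thesis .
qed

lemma KB:
  assumes s: "s > 0"
  defines "g \<equiv> min s 1 / 4"
  defines "Ck \<equiv> 2 powr (2*g) * 4 powr g * 64 powr (1/2 - g)"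
  shows "cmod (m1t n (n-a-b) a b) / real_of_int \<bar>Phi n (n-a-b) a b\<bar> * (real_of_int \<bar>Phi n (n-a-b) a b\<bar>) powr g * jbr n powr s
        \<le> Ck * (jbr (n-a-b) powr s * (jbr a powr s * jbr b powr s)) * (jbr a * jbr b) powr (-(1/2+g))"
proof -
  have g0: "g > 0" and g1: "g \<le> 1/4" and gs: "4 * g \<le> s" unfolding g_def using s by auto
  have Ck0: "Ck \<ge> 0" unfolding Ck_def by simp
  have R0: "0 \<le> Ck * (jbr (n-a-b) powr s * (jbr a powr s * jbr b powr s)) * (jbr a * jbr b) powr (-(1/2+g))"
    using Ck0 by simp
  show ?thesis
  proof (cases "m1t n (n-a-b) a b = 0")
    case True then show ?thesis using R0 by simp
  next
    case False
    note S = supp[OF False]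
    define P where "P = \<bar>Phi n (n-a-b) a b\<bar>"
    define Q where "Q = n * \<bar>a + b\<bar>"
    define n1 where "n1 = n - a - b"
    define h where "h = hh2 a"
    note I = INT[OF S, folded n1_def P_def Q_def h_def]
    have K: "cmod (m1t n (n-a-b) a b) = 2 * real_of_int Q / (real_of_int n1 * real_of_int h)"
      using cmod_m1t[OF False] unfolding Q_def n1_def h_def .
    have h1: "real_of_int h \<ge> 1" using hh2_ge1[of a] unfolding h_def by simp
    have n1r: "real_of_int n1 \<ge> 1" "real_of_int n < real_of_int n1" using I(5) S(1) by simp_all
    have Pr: "real_of_int P > 0" using I(1) by simp
    have Qr: "real_of_int Q > 0" unfolding Q_def using S(1,2) by simp
    define J where "J = jbr a * jbr b"
    have J1: "J \<ge> 1" unfolding J_def using jbr_ge1[of a] jbr_ge1[of b] by (metis mult_mono mult_1_left zero_le_one order_trans)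
    define x where "x = cmod (m1t n (n-a-b) a b) / real_of_int P"
    have x0: "x > 0" unfolding x_def K using Qr Pr h1 n1r by simp
    have B1: "x * real_of_int n1 \<le> 2"
    proof -
      have "real_of_int Q \<le> real_of_int P * real_of_int h" using I(2) by (simp flip: of_int_mult)
      then have "2 * real_of_int Q / (real_of_int P * real_of_int h) \<le> 2"
        using Pr h1 by (simp add: divide_le_eq)
      then show ?thesis unfolding x_def K using n1r by (simp add: field_simps)
    qed
    have B2: "x^2 * J \<le> 64"
    proof -
      have A: "4 * (real_of_int Q)^2 * ((1 + \<bar>real_of_int a\<bar>) * (1 + \<bar>real_of_int b\<bar>))
             \<le> 64 * ((real_of_int P)^2 * (real_of_int n1)^2 * (real_of_int h)^2)"
      proof -
        have "real_of_int (4 * Q^2 * ((1 + \<bar>a\<bar>) * (1 + \<bar>b\<bar>))) \<le> real_of_int (64 * (P^2 * n1^2 * h^2))"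
          using I(3) by (simp only: of_int_le_iff)
        then show ?thesis by simp
      qed
      have Jle: "J \<le> (1 + \<bar>real_of_int a\<bar>) * (1 + \<bar>real_of_int b\<bar>)"
        unfolding J_def by (intro mult_mono jbr_le_1abs) (auto simp: jbr_pos less_imp_le)
      have "x^2 * J \<le> x^2 * ((1 + \<bar>real_of_int a\<bar>) * (1 + \<bar>real_of_int b\<bar>))"
        using Jle by (intro mult_left_mono) auto
      also have "\<dots> = 4 * (real_of_int Q)^2 * ((1 + \<bar>real_of_int a\<bar>) * (1 + \<bar>real_of_int b\<bar>))
             / ((real_of_int P)^2 * (real_of_int n1)^2 * (real_of_int h)^2)"
        unfolding x_def K by (simp add: power2_eq_square field_simps)
      also have "\<dots> \<le> 64" using A Pr n1r h1 by (simp add: divide_le_eq)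
      finally show ?thesis .
    qed
    have B3: "real_of_int P \<le> 4 * ((real_of_int n1)^2 * J^2)"
    proof -
      have "J^2 = (1 + (real_of_int a)^2) * (1 + (real_of_int b)^2)"
        unfolding J_def by (simp add: power_mult_distrib jbr_sq)
      moreover have "real_of_int P \<le> real_of_int (4 * (n1^2 * ((1 + a^2) * (1 + b^2))))"
        using I(4) by (simp only: of_int_le_iff)
      ultimately show ?thesis by simp
    qed
    have M: "x * (real_of_int P) powr g \<le> Ck * J powr (3*g - 1/2)"
      unfolding Ck_def by (rule interp[OF x0 n1r(1) J1 g0 g1 B1 B2 Pr B3])
    have W1: "jbr n powr s \<le> jbr n1 powr s"
      using n1r S(1) s by (intro jbr_powr_mono) auto
    have W2: "J powr (3*g - 1/2) \<le> (jbr a powr s * jbr b powr s) * J powr (-(1/2+g))"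
    proof -
      have "J powr (3*g - 1/2) = J powr (4*g) * J powr (-(1/2+g))"
        by (simp add: powr_add[symmetric] algebra_simps)
      also have "\<dots> \<le> J powr s * J powr (-(1/2+g))"
        using J1 gs by (intro mult_right_mono powr_mono) auto
      also have "J powr s = jbr a powr s * jbr b powr s"
        unfolding J_def by (simp add: powr_mult jbr_pos less_imp_le)
      finally show ?thesis .
    qed
    have "x * (real_of_int P) powr g * jbr n powr s \<le> (Ck * J powr (3*g - 1/2)) * jbr n1 powr s"
      by (rule mult_mono) (use M W1 x0 Ck0 in auto)
    also have "\<dots> \<le> (Ck * ((jbr a powr s * jbr b powr s) * J powr (-(1/2+g)))) * jbr n1 powr s"
      by (rule mult_right_mono, rule mult_left_mono) (use W2 Ck0 in auto)
    finally show ?thesis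
      unfolding x_def P_def n1_def J_def by (simp add: ac_simps)
  qed
qed

lemma infsum_diff':
  fixes f g :: "'a \<Rightarrow> complex"
  assumes "f summable_on A" "g summable_on A"
  shows "infsum (\<lambda>x. f x - g x) A = infsum f A - infsum g A"
    "(\<lambda>x. f x - g x) summable_on A"
proof -
  have ng: "(\<lambda>x. - g x) summable_on A" using assms(2) by (simp add: summable_on_uminus)
  show "(\<lambda>x. f x - g x) summable_on A" using summable_on_add[OF assms(1) ng] by simp
  show "infsum (\<lambda>x. f x - g x) A = infsum f A - infsum g A"
    using infsum_add[OF assms(1) ng] infsum_uminus[of g A] by simp
qed

definition cN :: "real \<Rightarrow> real \<Rightarrow> int \<Rightarrow> int \<Rightarrow> int \<Rightarrow> complex" where
  "cN M t n a b = (if n > 0 \<and> real_of_int \<bar>Phi n (n-a-b) a b\<bar> > M then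
      - \<i> * (exp (\<i> * of_real t * of_int (Phi n (n-a-b) a b)) * m1t n (n-a-b) a b / of_int (Phi n (n-a-b) a b))
     else 0)"

lemma N0_TL: "N0 M w t n = TL (cN M t) (w t) (w t) (star (w t)) n"
proof (cases "n > 0")
  case False
  then have "TL (cN M t) (w t) (w t) (star (w t)) n = (\<Sum>\<^sub>\<infinity>ab::int\<times>int. 0)"
    unfolding TL_def cN_def by (intro infsum_cong) (simp add: case_prod_beta)
  then show ?thesis using False unfolding N0_def by simp
next
  case True
  define F where "F = (\<lambda>(n1, n2, n3). exp (\<i> * of_real t * of_int (Phi n n1 n2 n3)) * m1t n n1 n2 n3
              / of_int (Phi n n1 n2 n3) * w t n1 * w t n2 * star (w t) n3)"
  define S where "S = {(n1, n2, n3). n1 + n2 + n3 = n \<and> real_of_int \<bar>Phi n n1 n2 n3\<bar> > M}"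
  define S' where "S' = {(a, b). real_of_int \<bar>Phi n (n-a-b) a b\<bar> > M}"
  have N: "N0 M w t n = - \<i> * infsum F S"
    using True unfolding N0_def F_def S_def by simp
  have 1: "infsum F S = infsum (\<lambda>(a,b). F (n-a-b, a, b)) S'"
    by (rule infsum_reindex_bij_witness[where i="\<lambda>(a,b). (n-a-b, a, b)" and j="\<lambda>(n1,n2,n3). (n2,n3)"])
       (auto simp: S_def S'_def)
  have 2: "infsum (\<lambda>(a,b). F (n-a-b, a, b)) S' = infsum (\<lambda>(a,b). if (a,b) \<in> S' then F (n-a-b, a, b) else 0) UNIV"
    by (rule infsum_cong_neutral) auto
  have 3: "- \<i> * infsum (\<lambda>(a,b). if (a,b) \<in> S' then F (n-a-b, a, b) else 0) UNIV
       = infsum (\<lambda>(a,b). - \<i> * (if (a,b) \<in> S' then F (n-a-b, a, b) else 0)) UNIV"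
    by (subst infsum_cmult_right'[symmetric]) (simp add: case_prod_unfold)
  show ?thesis unfolding N 1 2 3 TL_def
    by (rule infsum_cong) (auto simp: cN_def S'_def F_def True)
qed

lemma cis_sub1: "cmod (cis x - 1) \<le> \<bar>x\<bar>"
proof -
  have "(cmod (cis x - 1))\<^sup>2 = (cos x - 1)\<^sup>2 + (sin x)\<^sup>2" by (simp add: cmod_power2)
  also have "\<dots> = 2 - 2 * cos x" using sin_cos_squared_add[of x] by (simp add: power2_eq_square algebra_simps)
  also have "\<dots> = 4 * (sin (x/2))\<^sup>2" using cos_double_sin[of "x/2"] by simp
  also have "\<dots> \<le> 4 * (x/2)\<^sup>2"
  proof -
    have "(sin (x/2))\<^sup>2 \<le> (x/2)\<^sup>2" using abs_sin_x_le_abs_x[of "x/2"] abs_le_square_iff by blast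
    then show ?thesis by simp
  qed
  also have "\<dots> = (\<bar>x\<bar>)\<^sup>2" by (simp add: power2_eq_square)
  finally show ?thesis by (rule power2_le_imp_le) simp
qed

lemma exp_diff_bound:
  fixes a b g :: real
  assumes g0: "g > 0" and g1: "g \<le> 1"
  shows "cmod (exp (\<i> * of_real a) - exp (\<i> * of_real b)) \<le> 2 * \<bar>a - b\<bar> powr g"
proof -
  have e: "exp (\<i> * of_real a) - exp (\<i> * of_real b) = exp (\<i> * of_real b) * (cis (a - b) - 1)"
  proof -
    have "exp (\<i> * of_real b) * cis (a - b) = exp (\<i> * of_real b + \<i> * of_real (a - b))"
      by (simp add: cis_conv_exp mult_exp_exp)
    also have "\<dots> = exp (\<i> * of_real a)" by (simp add: algebra_simps)
    finally show ?thesis by (simp add: algebra_simps)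
  qed
  have L1: "cmod (exp (\<i> * of_real a) - exp (\<i> * of_real b)) \<le> \<bar>a - b\<bar>"
    unfolding e norm_mult using cis_sub1[of "a-b"] by simp
  have L2: "cmod (exp (\<i> * of_real a) - exp (\<i> * of_real b)) \<le> 2"
    using norm_triangle_ineq4[of "exp (\<i> * of_real a)" "exp (\<i> * of_real b)"] by simp
  show ?thesis
  proof (cases "\<bar>a - b\<bar> \<le> 1")
    case True
    have "\<bar>a - b\<bar> = \<bar>a - b\<bar> powr 1 \<or> a = b" by auto
    then have "\<bar>a - b\<bar> \<le> \<bar>a - b\<bar> powr g"
    proof
      assume "\<bar>a - b\<bar> = \<bar>a - b\<bar> powr 1"
      also have "\<dots> \<le> \<bar>a - b\<bar> powr g" using True g1 by (intro powr_mono') auto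
      finally show ?thesis .
    qed simp
    then show ?thesis using L1 by (smt (verit) powr_ge_zero)
  next
    case False
    then have "1 \<le> \<bar>a - b\<bar> powr g" using g0 by (intro ge_one_powr_ge_zero) auto
    then show ?thesis using L2 by linarith
  qed
qed

definition gam :: "real \<Rightarrow> real" where "gam s = min s 1 / 4"
definition CK :: "real \<Rightarrow> real" where "CK s = 2 powr (2 * gam s) * 4 powr (gam s) * 64 powr (1/2 - gam s)"
definition kap :: "real \<Rightarrow> int \<Rightarrow> int \<Rightarrow> real" where "kap s a b = (jbr a * jbr b) powr (-(1/2 + gam s))"
definition S1 :: "real \<Rightarrow> real" where "S1 s = (\<Sum>\<^sub>\<infinity>k. jbr k powr (-(1 + 2 * gam s)))"
definition C0 :: "real \<Rightarrow> real" where "C0 s = CK s * S1 s"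

lemma gam_pos: "s > 0 \<Longrightarrow> gam s > 0" and gam_le: "gam s \<le> 1/4"
  unfolding gam_def by auto

lemma CK_nonneg: "CK s \<ge> 0" unfolding CK_def by simp
lemma S1_nonneg: "S1 s \<ge> 0" unfolding S1_def by (simp add: infsum_nonneg)
lemma C0_nonneg: "C0 s \<ge> 0" unfolding C0_def using CK_nonneg S1_nonneg by simp
lemma kap_nonneg: "kap s a b \<ge> 0" unfolding kap_def by simp

lemma KB': "s > 0 \<Longrightarrow> cmod (m1t n (n-a-b) a b) / real_of_int \<bar>Phi n (n-a-b) a b\<bar> * (real_of_int \<bar>Phi n (n-a-b) a b\<bar>) powr (gam s) * jbr n powr s
        \<le> CK s * (jbr (n-a-b) powr s * (jbr a powr s * jbr b powr s)) * kap s a b"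
  using KB[of s n a b] unfolding gam_def CK_def kap_def by simp

lemma kap_has_sum:
  assumes s: "s > 0"
  shows "((\<lambda>(a,b). (A * kap s a b)\<^sup>2) has_sum (A * S1 s)\<^sup>2) UNIV"
proof -
  have p: "1 + 2 * gam s > 1" using gam_pos[OF s] by simp
  have h: "((\<lambda>(a,b). (jbr a * jbr b) powr (-(1 + 2 * gam s))) has_sum (S1 s)\<^sup>2) UNIV"
    unfolding S1_def by (rule summable_kappa[OF p])
  have e: "(kap s a b)\<^sup>2 = (jbr a * jbr b) powr (-(1 + 2 * gam s))" for a b
  proof -
    have J: "jbr a * jbr b > 0" using jbr_pos[of a] jbr_pos[of b] by simp
    have "(kap s a b)\<^sup>2 = (jbr a * jbr b) powr (-(1/2 + gam s) + -(1/2 + gam s))"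
      unfolding kap_def by (simp only: power2_eq_square powr_add)
    also have "-(1/2 + gam s) + -(1/2 + gam s) = -(1 + 2 * gam s)" by simp
    finally show "(kap s a b)\<^sup>2 = (jbr a * jbr b) powr (-(1 + 2 * gam s))" .
  qed
  show ?thesis using has_sum_cmult_right[OF h, of "A\<^sup>2"]
    by (simp only: e power_mult_distrib case_prod_unfold)
qed

lemma cN_bound:
  assumes s: "s > 0" and M: "M \<ge> 1"
  shows "cmod (cN M t n a b) * jbr n powr s \<le> (M powr (- gam s) * CK s * kap s a b) * (jbr (n-a-b) powr s * (jbr a powr s * jbr b powr s))"
proof (cases "n > 0 \<and> real_of_int \<bar>Phi n (n-a-b) a b\<bar> > M")
  case False
  then have "cN M t n a b = 0" "cN M t0 n a b = 0" unfolding cN_def by auto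
  then show ?thesis using CK_nonneg kap_nonneg by simp
next
  case True
  define P where "P = real_of_int \<bar>Phi n (n-a-b) a b\<bar>"
  have P: "P > M" "P > 0" using True M unfolding P_def by auto
  have c: "cmod (cN M t n a b) = cmod (m1t n (n-a-b) a b) / P"
  proof -
    have "exp (\<i> * of_real t * of_int (Phi n (n-a-b) a b)) = exp (\<i> * of_real (t * of_int (Phi n (n-a-b) a b)))"
      by (simp add: mult.assoc)
    then show ?thesis unfolding cN_def P_def using True by (simp add: norm_mult norm_divide)
  qed
  have g: "gam s > 0" using gam_pos[OF s] .
  have G: "1 \<le> P powr gam s * M powr (- gam s)"
  proof -
    have "M powr gam s \<le> P powr gam s" using P M g by (intro powr_mono2) auto
    moreover have "M powr gam s > 0" using M by simp
    ultimately show ?thesis by (simp add: powr_minus field_simps)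
  qed
  have X0: "0 \<le> cmod (m1t n (n-a-b) a b) / P * jbr n powr s" using P by simp
  have "cmod (cN M t n a b) * jbr n powr s = (cmod (m1t n (n-a-b) a b) / P * jbr n powr s) * 1"
    unfolding c by simp
  also have "\<dots> \<le> (cmod (m1t n (n-a-b) a b) / P * jbr n powr s) * (P powr gam s * M powr (- gam s))"
    by (rule mult_left_mono[OF G X0])
  also have "\<dots> = M powr (- gam s) * (cmod (m1t n (n-a-b) a b) / P * P powr gam s * jbr n powr s)"
    by (simp add: ac_simps)
  also have "\<dots> \<le> M powr (- gam s) * (CK s * (jbr (n-a-b) powr s * (jbr a powr s * jbr b powr s)) * kap s a b)"
    using KB'[OF s, of n a b] unfolding P_def by (intro mult_left_mono) auto
  finally show ?thesis by (simp add: ac_simps)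
qed

lemma cN_diff_bound:
  assumes s: "s > 0"
  shows "cmod (cN M t n a b - cN M t0 n a b) * jbr n powr s \<le> (2 * \<bar>t - t0\<bar> powr gam s * CK s * kap s a b) * (jbr (n-a-b) powr s * (jbr a powr s * jbr b powr s))"
proof (cases "n > 0 \<and> real_of_int \<bar>Phi n (n-a-b) a b\<bar> > M")
  case False
  then have "cN M t n a b = 0" "cN M t0 n a b = 0" unfolding cN_def by auto
  then show ?thesis using CK_nonneg kap_nonneg by simp
next
  case True
  define F where "F = real_of_int (Phi n (n-a-b) a b)"
  define P where "P = \<bar>F\<bar>"
  have g: "gam s > 0" "gam s \<le> 1" using gam_pos[OF s] gam_le[of s] by auto
  have e: "cN M t n a b - cN M t0 n a b = - \<i> * ((exp (\<i> * of_real (t * F)) - exp (\<i> * of_real (t0 * F))) * (m1t n (n-a-b) a b / of_real F))"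
    unfolding cN_def F_def using True by (simp add: algebra_simps)
  have "cmod (cN M t n a b - cN M t0 n a b) = cmod (exp (\<i> * of_real (t * F)) - exp (\<i> * of_real (t0 * F))) * (cmod (m1t n (n-a-b) a b) / P)"
    unfolding e P_def by (simp add: norm_mult norm_divide)
  also have "\<dots> \<le> (2 * \<bar>t * F - t0 * F\<bar> powr gam s) * (cmod (m1t n (n-a-b) a b) / P)"
    by (intro mult_right_mono exp_diff_bound g) (simp add: P_def)
  also have "\<bar>t * F - t0 * F\<bar> powr gam s = \<bar>t - t0\<bar> powr gam s * P powr gam s"
    unfolding P_def by (simp add: left_diff_distrib[symmetric] abs_mult powr_mult)
  finally have A: "cmod (cN M t n a b - cN M t0 n a b) \<le> 2 * \<bar>t - t0\<bar> powr gam s * (cmod (m1t n (n-a-b) a b) / P * P powr gam s)"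
    by (simp add: ac_simps)
  have "cmod (cN M t n a b - cN M t0 n a b) * jbr n powr s \<le> (2 * \<bar>t - t0\<bar> powr gam s * (cmod (m1t n (n-a-b) a b) / P * P powr gam s)) * jbr n powr s"
    using A by (intro mult_right_mono) auto
  also have "\<dots> = 2 * \<bar>t - t0\<bar> powr gam s * (cmod (m1t n (n-a-b) a b) / P * P powr gam s * jbr n powr s)"
    by (simp add: ac_simps)
  also have "\<dots> \<le> 2 * \<bar>t - t0\<bar> powr gam s * (CK s * (jbr (n-a-b) powr s * (jbr a powr s * jbr b powr s)) * kap s a b)"
    using KB'[OF s, of n a b] unfolding P_def F_def by (intro mult_left_mono) auto
  finally show ?thesis by (simp add: ac_simps)
qed

lemma TRI_N:
  assumes s: "s > 0" and M: "M \<ge> 1" and f1: "in_l2s s f1" and f2: "in_l2s s f2" and f3: "in_l2s s f3"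
  shows "(\<lambda>(a,b). cN M t n a b * f1 (n-a-b) * f2 a * f3 b) summable_on UNIV"
    and "in_l2s s (TL (cN M t) f1 f2 f3)"
    and "l2s_norm s (TL (cN M t) f1 f2 f3) \<le> M powr (- gam s) * C0 s * (l2s_norm s f1 * (l2s_norm s f2 * l2s_norm s f3))"
proof -
  define A where "A = M powr (- gam s) * CK s"
  have A0: "A \<ge> 0" unfolding A_def using CK_nonneg by simp
  note T = TRI[where \<kappa>="\<lambda>a b. A * kap s a b" and c="cN M t" and K="(A * S1 s)\<^sup>2",
      OF _ kap_has_sum[OF s] _ f1 f2 f3]
  have k0: "\<And>a b. 0 \<le> A * kap s a b" using A0 kap_nonneg by simp
  have cb: "\<And>n a b. cmod (cN M t n a b) * jbr n powr s \<le> A * kap s a b * (jbr (n-a-b) powr s * (jbr a powr s * jbr b powr s))"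
    unfolding A_def by (rule cN_bound[OF s M])
  have sq: "sqrt ((A * S1 s)\<^sup>2) = M powr (- gam s) * C0 s"
    unfolding A_def C0_def using CK_nonneg S1_nonneg by (simp add: ac_simps)
  show "(\<lambda>(a,b). cN M t n a b * f1 (n-a-b) * f2 a * f3 b) summable_on UNIV"
    using T(1)[OF k0 cb] .
  show "in_l2s s (TL (cN M t) f1 f2 f3)" using T(2)[OF k0 cb] .
  show "l2s_norm s (TL (cN M t) f1 f2 f3) \<le> M powr (- gam s) * C0 s * (l2s_norm s f1 * (l2s_norm s f2 * l2s_norm s f3))"
    using T(3)[OF k0 cb] unfolding sq .
qed

lemma TRI_D:
  assumes s: "s > 0" and f1: "in_l2s s f1" and f2: "in_l2s s f2" and f3: "in_l2s s f3"
  shows "(\<lambda>(a,b). (cN M t n a b - cN M t0 n a b) * f1 (n-a-b) * f2 a * f3 b) summable_on UNIV"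
    and "in_l2s s (TL (\<lambda>n a b. cN M t n a b - cN M t0 n a b) f1 f2 f3)"
    and "l2s_norm s (TL (\<lambda>n a b. cN M t n a b - cN M t0 n a b) f1 f2 f3) \<le> 2 * \<bar>t - t0\<bar> powr gam s * C0 s * (l2s_norm s f1 * (l2s_norm s f2 * l2s_norm s f3))"
proof -
  define A where "A = 2 * \<bar>t - t0\<bar> powr gam s * CK s"
  have A0: "A \<ge> 0" unfolding A_def using CK_nonneg by simp
  note T = TRI[where \<kappa>="\<lambda>a b. A * kap s a b" and c="\<lambda>n a b. cN M t n a b - cN M t0 n a b" and K="(A * S1 s)\<^sup>2",
      OF _ kap_has_sum[OF s] _ f1 f2 f3]
  have k0: "\<And>a b. 0 \<le> A * kap s a b" using A0 kap_nonneg by simp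
  have cb: "\<And>n a b. cmod (cN M t n a b - cN M t0 n a b) * jbr n powr s \<le> A * kap s a b * (jbr (n-a-b) powr s * (jbr a powr s * jbr b powr s))"
    unfolding A_def by (rule cN_diff_bound[OF s])
  have sq: "sqrt ((A * S1 s)\<^sup>2) = 2 * \<bar>t - t0\<bar> powr gam s * C0 s"
    unfolding A_def C0_def using CK_nonneg S1_nonneg by (simp add: ac_simps)
  show "(\<lambda>(a,b). (cN M t n a b - cN M t0 n a b) * f1 (n-a-b) * f2 a * f3 b) summable_on UNIV"
    using T(1)[OF k0 cb] .
  show "in_l2s s (TL (\<lambda>n a b. cN M t n a b - cN M t0 n a b) f1 f2 f3)" using T(2)[OF k0 cb] .
  show "l2s_norm s (TL (\<lambda>n a b. cN M t n a b - cN M t0 n a b) f1 f2 f3) \<le> 2 * \<bar>t - t0\<bar> powr gam s * C0 s * (l2s_norm s f1 * (l2s_norm s f2 * l2s_norm s f3))"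
    using T(3)[OF k0 cb] unfolding sq .
qed

lemma TL_lin3:
  assumes sF: "(\<lambda>(a,b). c n a b * u1 (n-a-b) * u2 a * u3 b) summable_on UNIV"
    and sG: "(\<lambda>(a,b). c n a b * v1 (n-a-b) * v2 a * v3 b) summable_on UNIV"
    and s1: "(\<lambda>(a,b). c n a b * (u1 (n-a-b) - v1 (n-a-b)) * u2 a * u3 b) summable_on UNIV"
    and s2: "(\<lambda>(a,b). c n a b * v1 (n-a-b) * (u2 a - v2 a) * u3 b) summable_on UNIV"
    and s3: "(\<lambda>(a,b). c n a b * v1 (n-a-b) * v2 a * (u3 b - v3 b)) summable_on UNIV"
  shows "TL c u1 u2 u3 n - TL c v1 v2 v3 n = TL c (\<lambda>k. u1 k - v1 k) u2 u3 n + TL c v1 (\<lambda>k. u2 k - v2 k) u3 n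
          + TL c v1 v2 (\<lambda>k. u3 k - v3 k) n"
proof -
  have "TL c u1 u2 u3 n - TL c v1 v2 v3 n =
      (\<Sum>\<^sub>\<infinity>ab. (\<lambda>(a,b). c n a b * u1 (n-a-b) * u2 a * u3 b) ab - (\<lambda>(a,b). c n a b * v1 (n-a-b) * v2 a * v3 b) ab)"
    unfolding TL_def by (rule infsum_diff'(1)[symmetric, OF sF sG])
  also have "\<dots> = (\<Sum>\<^sub>\<infinity>ab. ((\<lambda>(a,b). c n a b * (u1 (n-a-b) - v1 (n-a-b)) * u2 a * u3 b) ab
        + (\<lambda>(a,b). c n a b * v1 (n-a-b) * (u2 a - v2 a) * u3 b) ab)
        + (\<lambda>(a,b). c n a b * v1 (n-a-b) * v2 a * (u3 b - v3 b)) ab)"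
    by (rule infsum_cong) (simp add: case_prod_beta algebra_simps)
  also have "\<dots> = TL c (\<lambda>k. u1 k - v1 k) u2 u3 n + TL c v1 (\<lambda>k. u2 k - v2 k) u3 n
          + TL c v1 v2 (\<lambda>k. u3 k - v3 k) n"
    unfolding TL_def
    by (simp add: infsum_add summable_on_add s1 s2 s3)
  finally show ?thesis .
qed

lemma star_diff: "(\<lambda>k. star u k - star v k) = star (\<lambda>k. u k - v k)"
  unfolding star_def by auto

lemma l2_sum3:
  assumes "in_l2s s A" "in_l2s s B" "in_l2s s C"
  shows "in_l2s s (\<lambda>n. A n + B n + C n)" "l2s_norm s (\<lambda>n. A n + B n + C n) \<le> l2s_norm s A + l2s_norm s B + l2s_norm s C"
proof -
  note m1 = l2_minkowski[OF assms(1,2)]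
  note m2 = l2_minkowski[OF m1(1) assms(3)]
  show "in_l2s s (\<lambda>n. A n + B n + C n)" using m2(1) .
  show "l2s_norm s (\<lambda>n. A n + B n + C n) \<le> l2s_norm s A + l2s_norm s B + l2s_norm s C"
    using m1(2) m2(2) by simp
qed

lemma alg_ineq:
  fixes K d x y :: real
  assumes "K \<ge> 0" "d \<ge> 0" "x \<ge> 0" "y \<ge> 0"
  shows "K * (d * (x * x)) + K * (y * (d * x)) + K * (y * (y * d)) \<le> K * 2 * (x\<^sup>2 + y\<^sup>2) * d"
proof -
  have "0 \<le> (x - y) * (x - y)" by simp
  then have a: "2 * (x * y) \<le> x * x + y * y" by (simp add: algebra_simps)
  have b: "0 \<le> x * y" using assms by simp
  have "x * x + y * x + y * y \<le> 2 * (x * x + y * y)" using a b by (simp add: mult.commute)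
  then have "(K * d) * (x * x + y * x + y * y) \<le> (K * d) * (2 * (x * x + y * y))"
    using assms by (intro mult_left_mono) auto
  then show ?thesis by (simp add: algebra_simps power2_eq_square)
qed

lemma TL_lip:
  assumes s: "s > 0" and M: "M \<ge> 1" and u: "in_l2s s u" and v: "in_l2s s v"
  shows "in_l2s s (\<lambda>n. TL (cN M \<tau>) u u (star u) n - TL (cN M \<tau>) v v (star v) n)"
    and "l2s_norm s (\<lambda>n. TL (cN M \<tau>) u u (star u) n - TL (cN M \<tau>) v v (star v) n)
          \<le> M powr (- gam s) * (2 * C0 s) * ((l2s_norm s u)\<^sup>2 + (l2s_norm s v)\<^sup>2) * l2s_norm s (\<lambda>k. u k - v k)"
proof -
  define D where "D = (\<lambda>k. u k - v k)"
  have d: "in_l2s s D" unfolding D_def using l2_diff(1)[OF u v] .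
  have su: "in_l2s s (star u)" and sv: "in_l2s s (star v)" and sd: "in_l2s s (star D)"
    using u v d by (simp_all add: l2_star)
  have sd': "in_l2s s (\<lambda>k. star u k - star v k)" using sd unfolding star_diff D_def .
  let ?c = "cN M \<tau>"
  have E: "(\<lambda>n. TL ?c u u (star u) n - TL ?c v v (star v) n) =
           (\<lambda>n. TL ?c D u (star u) n + TL ?c v D (star u) n + TL ?c v v (star D) n)"
  proof
    fix n
    show "TL ?c u u (star u) n - TL ?c v v (star v) n = TL ?c D u (star u) n + TL ?c v D (star u) n + TL ?c v v (star D) n"
      using TL_lin3[of ?c n u u "star u" v v "star v",
          OF TRI_N(1)[OF s M u u su] TRI_N(1)[OF s M v v sv]
             TRI_N(1)[OF s M d u su, unfolded D_def] TRI_N(1)[OF s M v d su, unfolded D_def]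
             TRI_N(1)[OF s M v v sd', of \<tau> n]]
      unfolding D_def star_diff by simp
  qed
  note T1 = TRI_N(2,3)[OF s M d u su, of \<tau>]
  note T2 = TRI_N(2,3)[OF s M v d su, of \<tau>]
  note T3 = TRI_N(2,3)[OF s M v v sd, of \<tau>]
  note S3 = l2_sum3[OF T1(1) T2(1) T3(1)]
  show "in_l2s s (\<lambda>n. TL (cN M \<tau>) u u (star u) n - TL (cN M \<tau>) v v (star v) n)"
    unfolding E using S3(1) .
  define K where "K = M powr (- gam s) * C0 s"
  have K0: "K \<ge> 0" unfolding K_def using C0_nonneg by simp
  have "l2s_norm s (\<lambda>n. TL ?c u u (star u) n - TL ?c v v (star v) n)
     \<le> K * (l2s_norm s D * (l2s_norm s u * l2s_norm s u)) + K * (l2s_norm s v * (l2s_norm s D * l2s_norm s u))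
        + K * (l2s_norm s v * (l2s_norm s v * l2s_norm s D))"
    unfolding E K_def using S3(2) T1(2) T2(2) T3(2) by (simp add: l2_star)
  also have "\<dots> \<le> K * 2 * ((l2s_norm s u)\<^sup>2 + (l2s_norm s v)\<^sup>2) * l2s_norm s D"
    by (rule alg_ineq) (use K0 l2s_norm_nonneg in auto)
  finally show "l2s_norm s (\<lambda>n. TL (cN M \<tau>) u u (star u) n - TL (cN M \<tau>) v v (star v) n)
          \<le> M powr (- gam s) * (2 * C0 s) * ((l2s_norm s u)\<^sup>2 + (l2s_norm s v)\<^sup>2) * l2s_norm s (\<lambda>k. u k - v k)"
    unfolding K_def D_def by (simp add: ac_simps)
qed

lemma N0_fun: "N0 M w t = TL (cN M t) (w t) (w t) (star (w t))"
  using N0_TL by auto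

lemma N0_est:
  assumes s: "s > 0" and M: "M \<ge> 1" and u: "in_l2s s (w t)"
  shows "in_l2s s (N0 M w t)" "l2s_norm s (N0 M w t) \<le> M powr (- gam s) * C0 s * (l2s_norm s (w t))^3"
  using TRI_N(2,3)[OF s M u u, of "star (w t)" t] u unfolding N0_fun
  by (simp_all add: l2_star power3_eq_cube ac_simps)

lemma N0_lip:
  assumes s: "s > 0" and M: "M \<ge> 1" and u: "in_l2s s (w t)" and v: "in_l2s s (w' t)"
  shows "in_l2s s (\<lambda>n. N0 M w t n - N0 M w' t n)"
    "l2s_norm s (\<lambda>n. N0 M w t n - N0 M w' t n) \<le> M powr (- gam s) * (2 * C0 s) * ((l2s_norm s (w t))\<^sup>2 + (l2s_norm s (w' t))\<^sup>2) * l2s_norm s (\<lambda>k. w t k - w' t k)"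
  using TL_lip[OF s M u v, of t] unfolding N0_fun by simp_all

lemma N0_cont:
  assumes s: "s > 0" and M: "M \<ge> 1" and u: "in_l2s s (w t)" and v: "in_l2s s (w t0)"
  shows "l2s_norm s (\<lambda>n. N0 M w t n - N0 M w t0 n) \<le> 2 * \<bar>t - t0\<bar> powr gam s * C0 s * (l2s_norm s (w t))^3
      + M powr (- gam s) * (2 * C0 s) * ((l2s_norm s (w t))\<^sup>2 + (l2s_norm s (w t0))\<^sup>2) * l2s_norm s (\<lambda>k. w t k - w t0 k)"
proof -
  have su: "in_l2s s (star (w t))" using u by (simp add: l2_star)
  let ?U = "\<lambda>c n. TL c (w t) (w t) (star (w t)) n"
  have E: "(\<lambda>n. N0 M w t n - N0 M w t0 n) = (\<lambda>n. TL (\<lambda>n a b. cN M t n a b - cN M t0 n a b) (w t) (w t) (star (w t)) n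
      + (TL (cN M t0) (w t) (w t) (star (w t)) n - TL (cN M t0) (w t0) (w t0) (star (w t0)) n))"
  proof
    fix n
    have "TL (cN M t) (w t) (w t) (star (w t)) n - TL (cN M t0) (w t) (w t) (star (w t)) n
        = TL (\<lambda>n a b. cN M t n a b - cN M t0 n a b) (w t) (w t) (star (w t)) n"
      unfolding TL_def
      by (subst infsum_diff'(1)[symmetric, OF TRI_N(1)[OF s M u u su] TRI_N(1)[OF s M u u su]])
         (simp add: case_prod_unfold algebra_simps)
    then show "N0 M w t n - N0 M w t0 n = TL (\<lambda>n a b. cN M t n a b - cN M t0 n a b) (w t) (w t) (star (w t)) n
      + (TL (cN M t0) (w t) (w t) (star (w t)) n - TL (cN M t0) (w t0) (w t0) (star (w t0)) n)"
      unfolding N0_TL by (simp add: algebra_simps)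
  qed
  note D = TRI_D(2,3)[OF s u u su, of M t t0]
  note L = TL_lip[OF s M u v, of t0]
  note m = l2_minkowski[OF D(1) L(1)]
  show ?thesis unfolding E using m(2) D(2) L(2)
    by (simp add: l2_star power3_eq_cube ac_simps)
qed

lemma CT_in: "w \<in> CT_l2s T s \<Longrightarrow> t \<in> {0..T} \<Longrightarrow> in_l2s s (w t)"
  unfolding CT_l2s_def by auto

lemma CT_cont: "w \<in> CT_l2s T s \<Longrightarrow> t \<in> {0..T} \<Longrightarrow>
    ((\<lambda>t'. l2s_norm s (\<lambda>n. w t' n - w t n)) \<longlongrightarrow> 0) (at t within {0..T})"
  unfolding CT_l2s_def by auto

lemma ev_within: "(\<And>x. x \<in> S \<Longrightarrow> P x) \<Longrightarrow> eventually P (at t within S)"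
  unfolding eventually_at_filter by (auto intro: always_eventually)

lemma l2_diff_sym: "l2s_norm s (\<lambda>n. f n - g n) = l2s_norm s (\<lambda>n. g n - f n)"
  using l2_uminus(2)[of s "\<lambda>n. f n - g n"] by simp

lemma norm_diff_ge:
  assumes "in_l2s s f" "in_l2s s g"
  shows "\<bar>l2s_norm s f - l2s_norm s g\<bar> \<le> l2s_norm s (\<lambda>n. f n - g n)"
proof -
  have d1: "in_l2s s (\<lambda>n. f n - g n)" "in_l2s s (\<lambda>n. g n - f n)" using l2_diff(1) assms by auto
  have "l2s_norm s (\<lambda>n. (f n - g n) + g n) \<le> l2s_norm s (\<lambda>n. f n - g n) + l2s_norm s g"
    using l2_minkowski(2)[OF d1(1) assms(2)] .
  moreover have "l2s_norm s (\<lambda>n. (g n - f n) + f n) \<le> l2s_norm s (\<lambda>n. g n - f n) + l2s_norm s f"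
    using l2_minkowski(2)[OF d1(2) assms(1)] .
  ultimately show ?thesis using l2_diff_sym[of s f g] by simp
qed

lemma CT_norm_cont:
  assumes w: "w \<in> CT_l2s T s"
  shows "continuous_on {0..T} (\<lambda>t. l2s_norm s (w t))"
  unfolding continuous_on_def
proof
  fix t assume t: "t \<in> {0..T}"
  have "((\<lambda>t'. l2s_norm s (w t') - l2s_norm s (w t)) \<longlongrightarrow> 0) (at t within {0..T})"
  proof (rule Lim_null_comparison[OF _ CT_cont[OF w t]])
    show "\<forall>\<^sub>F x in at t within {0..T}. norm (l2s_norm s (w x) - l2s_norm s (w t)) \<le> l2s_norm s (\<lambda>n. w x n - w t n)"
      by (rule ev_within) (use norm_diff_ge CT_in[OF w] t in auto)
  qed
  then show "((\<lambda>t. l2s_norm s (w t)) \<longlongrightarrow> l2s_norm s (w t)) (at t within {0..T})"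
    by (subst Lim_null) simp
qed

lemma CT_bdd:
  assumes w: "w \<in> CT_l2s T s"
  shows "bdd_above ((\<lambda>t. l2s_norm s (w t)) ` {0..T})"
  by (rule bounded_imp_bdd_above, rule compact_imp_bounded, rule compact_continuous_image[OF CT_norm_cont[OF w]]) simp

lemma CT_le:
  assumes w: "w \<in> CT_l2s T s" and t: "t \<in> {0..T}"
  shows "l2s_norm s (w t) \<le> CT_norm T s w"
  unfolding CT_norm_def by (rule cSUP_upper[OF t CT_bdd[OF w]])

lemma CT_norm_le:
  assumes T: "T \<ge> 0" and b: "\<And>t. t \<in> {0..T} \<Longrightarrow> l2s_norm s (f t) \<le> X"
  shows "CT_norm T s f \<le> X"
  unfolding CT_norm_def using T by (intro cSUP_least) (auto intro: b)

lemma CT_diff: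
  assumes w: "w \<in> CT_l2s T s" and v: "v \<in> CT_l2s T s"
  shows "(\<lambda>t n. w t n - v t n) \<in> CT_l2s T s"
  unfolding CT_l2s_def
proof (intro CollectI conjI ballI)
  fix t assume t: "t \<in> {0..T}"
  show "in_l2s s (\<lambda>n. w t n - v t n)" using l2_diff(1) CT_in[OF w t] CT_in[OF v t] .
  have "((\<lambda>t'. l2s_norm s (\<lambda>n. w t' n - w t n) + l2s_norm s (\<lambda>n. v t' n - v t n)) \<longlongrightarrow> 0 + 0) (at t within {0..T})"
    by (intro tendsto_add CT_cont[OF w t] CT_cont[OF v t])
  then have L: "((\<lambda>t'. l2s_norm s (\<lambda>n. w t' n - w t n) + l2s_norm s (\<lambda>n. v t' n - v t n)) \<longlongrightarrow> 0) (at t within {0..T})"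
    by simp
  show "((\<lambda>t'. l2s_norm s (\<lambda>n. (w t' n - v t' n) - (w t n - v t n))) \<longlongrightarrow> 0) (at t within {0..T})"
  proof (rule Lim_null_comparison[OF _ L])
    show "\<forall>\<^sub>F x in at t within {0..T}. norm (l2s_norm s (\<lambda>n. (w x n - v x n) - (w t n - v t n)))
        \<le> l2s_norm s (\<lambda>n. w x n - w t n) + l2s_norm s (\<lambda>n. v x n - v t n)"
    proof (rule ev_within)
      fix x assume x: "x \<in> {0..T}"
      have "l2s_norm s (\<lambda>n. (w x n - w t n) - (v x n - v t n)) \<le> l2s_norm s (\<lambda>n. w x n - w t n) + l2s_norm s (\<lambda>n. v x n - v t n)"
        by (rule l2_diff(2)) (use l2_diff(1) CT_in[OF w] CT_in[OF v] x t in auto)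
      moreover have "(\<lambda>n. (w x n - v x n) - (w t n - v t n)) = (\<lambda>n. (w x n - w t n) - (v x n - v t n))"
        by (auto simp: algebra_simps)
      ultimately show "norm (l2s_norm s (\<lambda>n. (w x n - v x n) - (w t n - v t n)))
        \<le> l2s_norm s (\<lambda>n. w x n - w t n) + l2s_norm s (\<lambda>n. v x n - v t n)"
        using l2s_norm_nonneg by simp
    qed
  qed
qed

lemma N0_CT:
  assumes s: "s > 0" and M: "M \<ge> 1" and w: "w \<in> CT_l2s T s"
  shows "N0 M w \<in> CT_l2s T s"
  unfolding CT_l2s_def
proof (intro CollectI conjI ballI)
  fix t assume t: "t \<in> {0..T}"
  show "in_l2s s (N0 M w t)" using N0_est(1)[of s M w t, OF s M CT_in[OF w t]] .
  define B where "B = CT_norm T s w"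
  have Bx: "0 \<le> l2s_norm s (w x) \<and> l2s_norm s (w x) \<le> B" if "x \<in> {0..T}" for x
    using CT_le[OF w that] l2s_norm_nonneg unfolding B_def by auto
  have B0: "B \<ge> 0" using Bx[OF t] by linarith
  define K1 where "K1 = 2 * C0 s * B^3"
  define K2 where "K2 = M powr (- gam s) * (2 * C0 s) * (B\<^sup>2 + B\<^sup>2)"
  have K20: "K2 \<ge> 0" unfolding K2_def using C0_nonneg by simp
  have K10: "K1 \<ge> 0" unfolding K1_def using C0_nonneg B0 by simp
  have lim1: "((\<lambda>x. \<bar>x - t\<bar> powr gam s) \<longlongrightarrow> 0) (at t within {0..T})"
  proof (rule tendsto_zero_powrI)
    show "((\<lambda>x. \<bar>x - t\<bar>) \<longlongrightarrow> 0) (at t within {0..T})"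
      using tendsto_rabs[OF tendsto_diff[OF tendsto_ident_at[of t "{0..T}"] tendsto_const[of t]]] by simp
  qed (use gam_pos[OF s] in auto)
  have lim: "((\<lambda>x. \<bar>x - t\<bar> powr gam s * K1 + K2 * l2s_norm s (\<lambda>n. w x n - w t n)) \<longlongrightarrow> 0) (at t within {0..T})"
    using tendsto_add[OF tendsto_mult_left_zero[OF lim1, of K1] tendsto_mult_right_zero[OF CT_cont[OF w t], of K2]]
    by simp
  show "((\<lambda>t'. l2s_norm s (\<lambda>n. N0 M w t' n - N0 M w t n)) \<longlongrightarrow> 0) (at t within {0..T})"
  proof (rule Lim_null_comparison[OF _ lim])
    show "\<forall>\<^sub>F x in at t within {0..T}. norm (l2s_norm s (\<lambda>n. N0 M w x n - N0 M w t n))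
        \<le> \<bar>x - t\<bar> powr gam s * K1 + K2 * l2s_norm s (\<lambda>n. w x n - w t n)"
    proof (rule ev_within)
      fix x assume x: "x \<in> {0..T}"
      have A: "l2s_norm s (\<lambda>n. N0 M w x n - N0 M w t n) \<le> 2 * \<bar>x - t\<bar> powr gam s * C0 s * (l2s_norm s (w x))^3
      + M powr (- gam s) * (2 * C0 s) * ((l2s_norm s (w x))\<^sup>2 + (l2s_norm s (w t))\<^sup>2) * l2s_norm s (\<lambda>k. w x k - w t k)"
        by (rule N0_cont[of s M w x t, OF s M CT_in[OF w x] CT_in[OF w t]])
      have c1: "(l2s_norm s (w x))^3 \<le> B^3" using Bx[OF x] by (intro power_mono) auto
      have c2: "(l2s_norm s (w x))\<^sup>2 + (l2s_norm s (w t))\<^sup>2 \<le> B\<^sup>2 + B\<^sup>2"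
        using Bx[OF x] Bx[OF t] by (intro add_mono power_mono) auto
      have e1: "2 * \<bar>x - t\<bar> powr gam s * C0 s * (l2s_norm s (w x))^3 \<le> \<bar>x - t\<bar> powr gam s * K1"
      proof -
        have "(2 * C0 s * \<bar>x - t\<bar> powr gam s) * (l2s_norm s (w x))^3 \<le> (2 * C0 s * \<bar>x - t\<bar> powr gam s) * B^3"
          using c1 C0_nonneg[of s] by (intro mult_left_mono) auto
        then show ?thesis unfolding K1_def by (simp add: ac_simps)
      qed
      have e2: "M powr (- gam s) * (2 * C0 s) * ((l2s_norm s (w x))\<^sup>2 + (l2s_norm s (w t))\<^sup>2) * l2s_norm s (\<lambda>k. w x k - w t k)
          \<le> K2 * l2s_norm s (\<lambda>n. w x n - w t n)"
        unfolding K2_def using c2 C0_nonneg l2s_norm_nonneg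
        by (intro mult_right_mono mult_left_mono) auto
      show "norm (l2s_norm s (\<lambda>n. N0 M w x n - N0 M w t n))
        \<le> \<bar>x - t\<bar> powr gam s * K1 + K2 * l2s_norm s (\<lambda>n. w x n - w t n)"
        using A e1 e2 l2s_norm_nonneg by simp
    qed
  qed
qed

theorem lemma3p4:
  fixes s :: real
  assumes "s > 0"
  shows "\<exists>\<delta>>0. \<exists>C::real. \<forall>(M::real) (T::real) w w'.
     M \<ge> 1 \<and> T > 0 \<and> w \<in> CT_l2s T s \<and> w' \<in> CT_l2s T s \<longrightarrow>
       N0 M w \<in> CT_l2s T s \<and>
       CT_norm T s (N0 M w) \<le> C * M powr (-\<delta>) * (CT_norm T s w) ^ 3 \<and>
       CT_norm T s (\<lambda>t n. N0 M w t n - N0 M w' t n)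
         \<le> C * M powr (-\<delta>) * ((CT_norm T s w)\<^sup>2 + (CT_norm T s w')\<^sup>2)
             * CT_norm T s (\<lambda>t n. w t n - w' t n)"
proof (intro exI conjI allI impI)
  note s = assms
  show "gam s > 0" using gam_pos[OF s] .
  fix M T :: real and w w' :: "real \<Rightarrow> int \<Rightarrow> complex"
  assume H: "M \<ge> 1 \<and> T > 0 \<and> w \<in> CT_l2s T s \<and> w' \<in> CT_l2s T s"
  then have M: "M \<ge> 1" and T: "T > 0" and w: "w \<in> CT_l2s T s" and w': "w' \<in> CT_l2s T s" by auto
  show "N0 M w \<in> CT_l2s T s" by (rule N0_CT[OF s M w])
  have Bx: "0 \<le> l2s_norm s (f x) \<and> l2s_norm s (f x) \<le> CT_norm T s f" if "f \<in> CT_l2s T s" "x \<in> {0..T}" for f x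
    using CT_le[OF that] l2s_norm_nonneg by auto
  have Mg: "M powr (- gam s) \<ge> 0" by simp
  have C00: "C0 s \<ge> 0" by (rule C0_nonneg)
  show "CT_norm T s (N0 M w) \<le> 2 * C0 s * M powr (- gam s) * (CT_norm T s w) ^ 3"
  proof (rule CT_norm_le)
    fix t assume t: "t \<in> {0..T}"
    have "l2s_norm s (N0 M w t) \<le> M powr (- gam s) * C0 s * (l2s_norm s (w t))^3"
      by (rule N0_est(2)[of s M w t, OF s M CT_in[OF w t]])
    also have "\<dots> \<le> M powr (- gam s) * C0 s * (CT_norm T s w)^3"
      using Bx[OF w t] Mg C00 by (intro mult_left_mono power_mono) auto
    also have "\<dots> \<le> 2 * C0 s * M powr (- gam s) * (CT_norm T s w) ^ 3"
      using Bx[OF w t] Mg C00 by (simp add: mult_left_mono ac_simps)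
    finally show "l2s_norm s (N0 M w t) \<le> 2 * C0 s * M powr (- gam s) * (CT_norm T s w) ^ 3" .
  qed (use T in simp)
  show "CT_norm T s (\<lambda>t n. N0 M w t n - N0 M w' t n)
         \<le> 2 * C0 s * M powr (- gam s) * ((CT_norm T s w)\<^sup>2 + (CT_norm T s w')\<^sup>2)
             * CT_norm T s (\<lambda>t n. w t n - w' t n)"
  proof (rule CT_norm_le)
    fix t assume t: "t \<in> {0..T}"
    have d: "(\<lambda>t n. w t n - w' t n) \<in> CT_l2s T s" by (rule CT_diff[OF w w'])
    have "l2s_norm s (\<lambda>n. N0 M w t n - N0 M w' t n) \<le> M powr (- gam s) * (2 * C0 s) * ((l2s_norm s (w t))\<^sup>2 + (l2s_norm s (w' t))\<^sup>2) * l2s_norm s (\<lambda>k. w t k - w' t k)"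
      by (rule N0_lip(2)[of s M w t w', OF s M CT_in[OF w t] CT_in[OF w' t]])
    also have "\<dots> \<le> M powr (- gam s) * (2 * C0 s) * ((CT_norm T s w)\<^sup>2 + (CT_norm T s w')\<^sup>2) * CT_norm T s (\<lambda>t n. w t n - w' t n)"
    proof (intro mult_mono mult_left_mono add_mono power_mono)
      show "l2s_norm s (\<lambda>k. w t k - w' t k) \<le> CT_norm T s (\<lambda>t n. w t n - w' t n)"
        using Bx[OF d t] by simp
    qed (use Bx[OF w t] Bx[OF w' t] Mg C00 l2s_norm_nonneg in auto)
    finally show "l2s_norm s (\<lambda>n. N0 M w t n - N0 M w' t n) \<le> 2 * C0 s * M powr (- gam s) * ((CT_norm T s w)\<^sup>2 + (CT_norm T s w')\<^sup>2)
             * CT_norm T s (\<lambda>t n. w t n - w' t n)"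
      by (simp add: ac_simps)
  qed (use T in simp)
qed

end
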